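(* Let $a\in(0,1.8]$ and $b>0$. Every right-angled triangle in the hyperbolic plane $\mathbb{H}^2$ (of curvature $-1$) whose two sides adjacent to the right angle have lengths $a$ and $b$ has area at least $\frac{a}{5}\cdot\min\{b,\pi\}$.
   Context: $\mathbb{H}^2$ is the hyperbolic plane of Gaussian curvature $-1$; lengths and areas are hyperbolic. *)

theory Defs
  imports "HOL-Analysis.Analysis"
begin

text \<open>The hyperbolic plane of curvature -1, realised in the Beltrami--Klein model:
  points are the points of the open unit disc (complex numbers of norm < 1),
  geodesics are Euclidean chords, so the geodesic triangle with vertices A, B, C is
  the Euclidean convex hull of the three points.\<close>

definition klein_disc :: "complex set" where
  "klein_disc = ball 0 1"

definition klein_dist :: "complex \<Rightarrow> complex \<Rightarrow> real" where
  "klein_dist u v = arcosh ((1 - u \<bullet> v) / sqrt ((1 - (norm u)\<^sup>2) * (1 - (norm v)\<^sup>2)))"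

definition klein_metric :: "complex \<Rightarrow> complex \<Rightarrow> complex \<Rightarrow> real" where
  "klein_metric x v w =
     (v \<bullet> w) / (1 - (norm x)\<^sup>2) + (x \<bullet> v) * (x \<bullet> w) / (1 - (norm x)\<^sup>2)\<^sup>2"

text \<open>Hyperbolic area: Riemannian area density (1-|x|^2)^(-3/2) of the Klein metric.\<close>
definition hyp_area :: "complex set \<Rightarrow> real" where
  "hyp_area S = integral S (\<lambda>x. 1 / (1 - (norm x)\<^sup>2) powr (3/2))"

definition hyp_triangle :: "complex \<Rightarrow> complex \<Rightarrow> complex \<Rightarrow> complex set" where
  "hyp_triangle A B C = convex hull {A, B, C}"

end

theory Submission
  imports Defs
begin

lemma powr32: "0 < (x::real) \<Longrightarrow> x powr (3/2) = x * sqrt x"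
proof -
  assume x: "0 < x"
  have "x powr (3/2) = x powr (1 + 1/2)" by simp
  also have "\<dots> = x * x powr (1/2)" using x powr_add[of x 1 "1/2"] by simp
  also have "\<dots> = x * sqrt x" using x by (simp add: powr_half_sqrt)
  finally show ?thesis .
qed

lemma inner_int:
  fixes A0 B0 :: real assumes "0 \<le> B0" "B0 < A0"
  shows "((\<lambda>q. 1 / (A0 - B0 * q^2) powr (3/2)) has_integral (1 / (A0 * sqrt (A0 - B0)))) {0..1}"
proof -
  let ?G = "\<lambda>q::real. q / (A0 * sqrt (A0 - B0 * q^2))"
  have D: "0 < A0 - B0 * q^2" if "q \<in> {0..1}" for q
  proof -
    have "q^2 \<le> 1" using that by (simp add: power_le_one)
    then have "B0 * q^2 \<le> B0" using assms by (simp add: mult_left_le)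
    then show ?thesis using assms by linarith
  qed
  have A0: "0 < A0" using assms by linarith
  have "((\<lambda>q. 1 / (A0 - B0 * q^2) powr (3/2)) has_integral (?G 1 - ?G 0)) {0..1}"
  proof (rule fundamental_theorem_of_calculus)
    show "0 \<le> (1::real)" by simp
    fix x :: real assume x: "x \<in> {0..1}"
    have Dx: "0 < A0 - B0 * x^2" using D[OF x] .
    have "(?G has_real_derivative
        (1 * (A0 * sqrt (A0 - B0 * x^2)) - x * (A0 * (inverse (sqrt (A0 - B0 * x^2)) / 2 * (- (B0 * (2 * x))))))
          / (A0 * sqrt (A0 - B0 * x^2))^2) (at x)"
      using Dx A0 by (auto intro!: derivative_eq_intros simp: power2_eq_square)
    moreover have "(1 * (A0 * sqrt (A0 - B0 * x^2)) - x * (A0 * (inverse (sqrt (A0 - B0 * x^2)) / 2 * (- (B0 * (2 * x))))))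
          / (A0 * sqrt (A0 - B0 * x^2))^2 = 1 / (A0 - B0 * x^2) powr (3/2)"
    proof -
      define D where "D = A0 - B0 * x^2"
      have Dp: "0 < D" using Dx by (simp add: D_def)
      have sD: "sqrt D * sqrt D = D" using Dp by simp
      have sp: "0 < sqrt D" using Dp by simp
      have e: "A0 = D + B0 * (x * x)" by (simp add: D_def power2_eq_square)
      show ?thesis unfolding D_def[symmetric] powr32[OF Dp]
        using sp A0 sD
        by (simp add: field_simps power2_eq_square) (simp add: e algebra_simps)
    qed
    ultimately show "(?G has_vector_derivative 1 / (A0 - B0 * x^2) powr (3/2)) (at x within {0..1})"
      by (simp add: has_real_derivative_iff_has_vector_derivative[symmetric] has_field_derivative_at_within)
  qed
  then show ?thesis by simp
qed

lemma outer_int: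
  fixes \<alpha> m :: real assumes al: "0 < \<alpha>" and m: "0 < m" and s1: "\<alpha> * (1 + m^2) < 1"
  shows "((\<lambda>p. m * \<alpha> * p / ((1 - \<alpha> * p^2) * sqrt (1 - \<alpha> * (1 + m^2) * p^2)))
          has_integral (arctan (1/m) - arctan (sqrt (1 - \<alpha> * (1 + m^2)) / m))) {0..1}"
proof -
  define s where "s = \<alpha> * (1 + m^2)"
  have sp: "0 < s" using al by (simp add: s_def add_pos_nonneg)
  let ?G = "\<lambda>p::real. - arctan (sqrt (1 - s * p^2) / m)"
  have D: "0 < 1 - s * q^2" if "q \<in> {0..1}" for q
  proof -
    have "q^2 \<le> 1" using that by (simp add: power_le_one)
    then have "s * q^2 \<le> s" using sp by (simp add: mult_left_le)
    then show ?thesis using s1 by (simp add: s_def)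
  qed
  have "((\<lambda>p. m * \<alpha> * p / ((1 - \<alpha> * p^2) * sqrt (1 - s * p^2))) has_integral (?G 1 - ?G 0)) {0..1}"
  proof (rule fundamental_theorem_of_calculus)
    show "0 \<le> (1::real)" by simp
    fix x :: real assume x: "x \<in> {0..1}"
    have Dx: "0 < 1 - s * x^2" using D[OF x] .
    have "(?G has_real_derivative
        inverse (1 + (1 - s * (x * x)) / (m * m)) * (inverse (sqrt (1 - s * (x * x))) * (x * s)) / m) (at x)"
      using Dx m by (auto intro!: derivative_eq_intros simp: power2_eq_square)
    moreover have "inverse (1 + (1 - s * (x * x)) / (m * m)) * (inverse (sqrt (1 - s * (x * x))) * (x * s)) / m
        = m * \<alpha> * x / ((1 - \<alpha> * x^2) * sqrt (1 - s * x^2))"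
    proof -
      define D where "D = 1 - s * (x * x)"
      have Dp: "0 < D" using Dx by (simp add: D_def power2_eq_square)
      have sqp: "0 < sqrt D" using Dp by simp
      have ax: "0 < 1 - \<alpha> * (x * x)"
      proof -
        have "\<alpha> * x^2 \<le> s * x^2" using al by (intro mult_right_mono) (auto simp: s_def)
        then show ?thesis using Dx by (simp add: power2_eq_square)
      qed
      have e1: "1 + D / (m * m) = s * (1 - \<alpha> * (x * x)) / (\<alpha> * (m * m))"
        using al m by (simp add: D_def s_def field_simps power2_eq_square)
      show ?thesis unfolding D_def[symmetric] power2_eq_square e1
        using m al sp sqp ax by (simp add: field_simps)
    qed
    ultimately show "(?G has_vector_derivative m * \<alpha> * x / ((1 - \<alpha> * x^2) * sqrt (1 - s * x^2))) (at x within {0..1})"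
      by (simp add: has_real_derivative_iff_has_vector_derivative[symmetric] has_field_derivative_at_within)
  qed
  then show ?thesis by (simp add: s_def)
qed

lemma arctan_identity:
  fixes ca sa cb sb :: real
  assumes sa: "0 < sa" and sb: "0 < sb" and ca: "ca^2 = 1 + sa^2" "0 < ca" and cb: "cb^2 = 1 + sb^2" "0 < cb"
  shows "arctan (sa * cb / sb) - arctan (sa / (ca * sb)) = 2 * arctan (sa * sb / ((ca + 1) * (cb + 1)))"
proof -
  define X where "X = sa * cb / sb"
  define Y where "Y = sa / (ca * sb)"
  define t where "t = sa * sb / ((ca + 1) * (cb + 1))"
  have Xp: "0 < X" and Yp: "0 < Y" and tp: "0 < t" using sa sb ca cb by (simp_all add: X_def Y_def t_def)
  have sa2: "sa^2 = ca^2 - 1" and sb2: "sb^2 = cb^2 - 1" using ca cb by simp_all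
  have ca1: "1 < ca"
  proof -
    have "1^2 < ca^2" using ca sa by simp
    then show ?thesis using ca(2) power_less_imp_less_base[of 1 2 ca] by simp
  qed
  have cb1: "1 < cb"
  proof -
    have "1^2 < cb^2" using cb sb by simp
    then show ?thesis using cb(2) power_less_imp_less_base[of 1 2 cb] by simp
  qed
  have t1: "t < 1"
  proof -
    have "sa < ca + 1"
    proof -
      have "sa^2 < (ca+1)^2" using ca ca1 by (simp add: power2_eq_square algebra_simps)
      then show ?thesis using ca1 power_less_imp_less_base[of sa 2 "ca+1"] by simp
    qed
    moreover have "sb < cb + 1"
    proof -
      have "sb^2 < (cb+1)^2" using cb cb1 by (simp add: power2_eq_square algebra_simps)
      then show ?thesis using cb1 power_less_imp_less_base[of sb 2 "cb+1"] by simp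
    qed
    ultimately have "sa * sb < (ca + 1) * (cb + 1)" using sa sb by (intro mult_strict_mono) auto
    then show ?thesis using ca1 cb1 by (simp add: t_def)
  qed
  define th1 where "th1 = arctan X - arctan Y"
  define th2 where "th2 = 2 * arctan t"
  have r1: "- (pi/2) < th1 \<and> th1 < pi/2" unfolding th1_def
    using arctan_ubound[of X] arctan_ubound[of Y] Xp Yp zero_less_arctan_iff[of X] zero_less_arctan_iff[of Y]
    by linarith
  have at1: "arctan t < pi/4" using t1 by (metis arctan_less_iff arctan_one)
  have r2: "- (pi/2) < th2 \<and> th2 < pi/2" unfolding th2_def using at1 tp zero_less_arctan_iff[of t]
    by linarith
  have c1: "cos th1 \<noteq> 0" using r1 by (intro cos_gt_zero_pi[THEN less_imp_neq, symmetric]) auto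
  have c2: "cos th2 \<noteq> 0" using r2 by (intro cos_gt_zero_pi[THEN less_imp_neq, symmetric]) auto
  have "tan th1 = (X - Y) / (1 + X * Y)" unfolding th1_def
    using c1 by (subst tan_diff) (auto simp: th1_def cos_arctan_not_zero tan_arctan)
  also have "\<dots> = sa * sb / (ca + cb)"
  proof -
    have d: "ca * sb^2 + sa^2 * cb = (ca + cb) * (ca * cb - 1)"
      unfolding sa2 sb2 by (simp add: algebra_simps power2_eq_square)
    have cc: "ca * cb - 1 > 0" using ca1 cb1
      using mult_strict_mono[of 1 ca 1 cb] by simp
    have xm: "X - Y = sa * (ca*cb - 1)/(ca * sb)" using sa sb ca(2) cb(2) by (simp add: X_def Y_def field_simps)
    have "1 + X*Y = (ca * sb^2 + sa^2 * cb)/(ca * sb^2)" using sa sb ca(2) cb(2)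
      by (simp add: X_def Y_def field_simps power2_eq_square)
    then have xp: "1 + X*Y = (ca + cb) * (ca * cb - 1)/(ca * sb^2)" unfolding d .
    obtain K where K: "K = ca * cb - 1" by simp
    have Kp: "K > 0" using cc K by simp
    have Kq1: "0 < K * ca" "0 < K * cb" using Kp ca(2) cb(2) by simp_all
    have Kq: "K * ca + K * cb \<noteq> 0" "ca + cb \<noteq> 0" using Kq1 ca(2) cb(2) by linarith+
    show ?thesis unfolding xm xp K[symmetric] using sa sb ca(2) cb(2) Kp Kq
      by (simp add: field_simps power2_eq_square)
  qed
  also have "\<dots> = 2 * t / (1 - t^2)"
  proof -
    obtain N where N: "N = sa * sb" by simp
    obtain P where P: "P = (ca + 1) * (cb + 1)" by simp
    have d: "P^2 - N^2 = 2 * P * (ca + cb)"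
      unfolding N P power_mult_distrib sa2 sb2 by (simp add: algebra_simps power2_eq_square)
    have Pp: "0 < P" using ca1 cb1 P by simp
    have Np: "0 < N" using sa sb N by simp
    have dp: "0 < P^2 - N^2" unfolding d using Pp ca1 cb1 by simp
    have tt: "t = N / P" by (simp add: t_def N P)
    have "2 * t / (1 - t^2) = 2 * N * P / (P^2 - N^2)"
      unfolding tt using Pp dp by (simp add: field_simps power2_eq_square)
    also have "\<dots> = (2 * P) * N / ((2 * P) * (ca + cb))" unfolding d by (simp add: mult_ac)
    also have "\<dots> = N / (ca + cb)" by (rule nonzero_mult_divide_mult_cancel_left) (use Pp in simp)
    finally show ?thesis by (simp add: N)
  qed
  also have "\<dots> = tan th2" unfolding th2_def
    using c2 by (subst tan_double) (auto simp: th2_def cos_arctan_not_zero tan_arctan)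
  finally have "tan th1 = tan th2" .
  then have "arctan (tan th1) = arctan (tan th2)" by simp
  then have "th1 = th2" using r1 r2 by (simp add: arctan_tan)
  then show ?thesis by (simp add: th1_def th2_def X_def Y_def t_def)
qed

lemma tanh_aux_nonneg:
  fixes u :: real assumes "0 \<le> u"
  shows "u * (1 - tanh u ^ 2) \<le> tanh u"
proof -
  let ?g = "\<lambda>u::real. tanh u - u * (1 - tanh u ^ 2)"
  have "?g 0 \<le> ?g u"
  proof (rule DERIV_nonneg_imp_nondecreasing[OF assms])
    fix x :: real assume x: "0 \<le> x" "x \<le> u"
    have "(?g has_real_derivative (1 - tanh x ^ 2) - ((1 - tanh x ^ 2) + x * (- (2 * tanh x * (1 - tanh x ^ 2))))) (at x)"
      by (auto intro!: derivative_eq_intros simp: power2_eq_square)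
    moreover have "0 \<le> (1 - tanh x ^ 2) - ((1 - tanh x ^ 2) + x * (- (2 * tanh x * (1 - tanh x ^ 2))))"
    proof -
      have "tanh x \<ge> 0" using x by simp
      moreover have "tanh x ^ 2 \<le> 1"
      proof -
        have "0 \<le> (1 - tanh x) * (1 + tanh x)" using tanh_real_bounds[of x]
          by (intro mult_nonneg_nonneg) auto
        then show ?thesis by (simp add: algebra_simps power2_eq_square)
      qed
      ultimately show ?thesis using x by (simp add: mult_nonneg_nonneg)
    qed
    ultimately show "\<exists>y. DERIV ?g x :> y \<and> 0 \<le> y" by blast
  qed
  then show ?thesis by simp
qed

lemma tanh_over_mono:
  fixes x y :: real assumes "0 < x" "x \<le> y"
  shows "tanh y / y \<le> tanh x / x"
proof -
  have "(\<lambda>u. tanh u / u) y \<le> (\<lambda>u. tanh u / u) x"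
  proof (rule DERIV_nonpos_imp_nonincreasing[OF assms(2)])
    fix t :: real assume t: "x \<le> t" "t \<le> y"
    then have tp: "t > 0" using assms by simp
    have "((\<lambda>u. tanh u / u) has_real_derivative ((1 - tanh t ^ 2) * t - tanh t * 1) / (t * t)) (at t)"
      using tp by (auto intro!: derivative_eq_intros)
    moreover have "((1 - tanh t ^ 2) * t - tanh t * 1) / (t * t) \<le> 0"
      using tanh_aux_nonneg[of t] tp by (intro divide_nonpos_pos) (auto simp: algebra_simps)
    ultimately show "\<exists>d. ((\<lambda>u. tanh u / u) has_real_derivative d) (at t) \<and> d \<le> 0" by blast
  qed
  then show ?thesis by simp
qed

lemma tanh_lin_lower:
  fixes x X :: real assumes "0 < x" "x \<le> X"
  shows "x * (tanh X / X) \<le> tanh x"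
proof -
  have "tanh X / X \<le> tanh x / x" by (rule tanh_over_mono[OF assms])
  then show ?thesis using assms(1) by (simp add: field_simps)
qed

lemma exp_taylor_lower:
  fixes x :: real assumes "0 \<le> x"
  shows "(\<Sum>m<n. x ^ m / fact m) \<le> exp x"
proof -
  obtain t where "exp x = (\<Sum>m<n. (x ^ m) / fact m) + (exp t / fact n) * x ^ n"
    using Maclaurin_exp_le by blast
  moreover have "0 \<le> (exp t / fact n) * x ^ n" using assms by simp
  ultimately show ?thesis by linarith
qed

lemma tanh_via_exp: "tanh (x::real) = (exp (2*x) - 1) / (exp (2*x) + 1)"
proof -
  define E where "E = exp x"
  have E: "E > 0" by (simp add: E_def)
  have e2: "exp (2*x) = E * E" by (simp add: E_def exp_add[symmetric])
  have em: "exp (-x) = inverse E" by (simp add: E_def exp_minus)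
  have d1: "E + E*(E*E) \<noteq> 0" "1 + E*E \<noteq> 0" "E*E + 1 \<noteq> 0" using E
    by (smt (verit) mult_pos_pos)+
  show ?thesis unfolding tanh_altdef E_def[symmetric] e2 em
    using E d1 by (simp add: field_simps)
qed

lemma tanh_09: "0.71 \<le> tanh (0.9::real)"
proof -
  have "(\<Sum>m<8. (1.8::real) ^ m / fact m) \<le> exp 1.8" by (rule exp_taylor_lower) simp
  then have e: "5.9 \<le> exp (1.8::real)" by (simp add: eval_nat_numeral fact_numeral)
  have "tanh (0.9::real) = (exp 1.8 - 1) / (exp 1.8 + 1)" by (simp add: tanh_via_exp)
  also have "0.71 \<le> \<dots>" using e by (simp add: field_simps)
  finally show ?thesis .
qed

lemma tanh_pi2: "0.915 \<le> tanh (pi/2)"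
proof -
  have "(\<Sum>m<10. (3.14::real) ^ m / fact m) \<le> exp 3.14" by (rule exp_taylor_lower) simp
  then have e: "22.6 \<le> exp (3.14::real)" by (simp add: eval_nat_numeral fact_numeral)
  have "tanh (1.57::real) = (exp 3.14 - 1) / (exp 3.14 + 1)" by (simp add: tanh_via_exp)
  also have "0.915 \<le> \<dots>" using e by (simp add: field_simps)
  finally have "0.915 \<le> tanh (1.57::real)" .
  also have "tanh 1.57 \<le> tanh (pi/2)" using pi_approx by simp
  finally show ?thesis .
qed

lemma arctan_lower:
  fixes z :: real assumes "0 \<le> z"
  shows "z - z^3/3 + z^5/5 - z^7/7 \<le> arctan z"
proof -
  let ?h = "\<lambda>u::real. arctan u - (u - u^3/3 + u^5/5 - u^7/7)"
  have "?h 0 \<le> ?h z"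
  proof (rule DERIV_nonneg_imp_nondecreasing[OF assms])
    fix x :: real assume x: "0 \<le> x" "x \<le> z"
    have "(?h has_real_derivative (1 / (1 + x^2) - (1 - x^2 + x^4 - x^6))) (at x)"
      by (auto intro!: derivative_eq_intros simp: field_simps eval_nat_numeral)
    moreover have "1 / (1 + x^2) - (1 - x^2 + x^4 - x^6) = x^8 / (1 + x^2)"
    proof -
      have "1 + x^2 > 0" by (simp add: add_pos_nonneg)
      then show ?thesis by (simp add: field_simps eval_nat_numeral)
    qed
    moreover have "0 \<le> x^8 / (1 + x^2)" by simp
    ultimately show "\<exists>y. DERIV ?h x :> y \<and> 0 \<le> y" by auto
  qed
  then show ?thesis by simp
qed

lemma poly_bound:
  fixes z :: real assumes "0 \<le> z" "z \<le> 0.6497"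
  shows "0.8705 * z \<le> z - z^3/3 + z^5/5 - z^7/7"
proof -
  define w where "w = z^2"
  have w0: "0 \<le> w" and wW: "w \<le> 0.4222"
  proof -
    show "0 \<le> w" by (simp add: w_def)
    have "z^2 \<le> 0.6497^2" using assms by (intro power_mono) auto
    then show "w \<le> 0.4222" by (simp add: w_def power2_eq_square)
  qed
  have w3: "w^3 \<le> 4222/10000 * w^2"
  proof -
    have "w^3 = w * w^2" by (simp add: eval_nat_numeral)
    also have "\<dots> \<le> 4222/10000 * w^2" using wW w0 by (intro mult_right_mono) auto
    finally show ?thesis .
  qed
  have q: "0 \<le> (4222/10000 - w) * (1/3 - 1396/10000 * (4222/10000 + w))"
    using w0 wW by (intro mult_nonneg_nonneg) auto
  have q': "- (4222/10000) / 3 + 1396/10000 * (17825284/100000000) \<le> - w / 3 + 1396/10000 * w^2"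
  proof -
    have "(4222/10000 - w) * (1/3 - 1396/10000 * (4222/10000 + w)) = (- w / 3 + 1396/10000 * w^2) - (- (4222/10000) / 3 + 1396/10000 * (17825284/100000000))"
      by (simp add: field_simps power2_eq_square)
    then show ?thesis using q by linarith
  qed
  have w2: "0 \<le> w^2" by simp
  have key: "0 \<le> 1295/10000 - w/3 + w^2/5 - w^3/7"
    using w3 q' w2 by linarith
  have "z - z^3/3 + z^5/5 - z^7/7 - 0.8705 * z = z * (0.1295 - w/3 + w^2/5 - w^3/7)"
    by (simp add: w_def algebra_simps eval_nat_numeral)
  also have "\<dots> \<ge> 0" using key assms by (simp add: mult_nonneg_nonneg)
  finally show ?thesis by simp
qed

lemma main_ineq:
  fixes a b :: real assumes a: "0 < a" "a \<le> 1.8" and b: "0 < b" "b \<le> pi"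
  shows "a * b / 5 \<le> 2 * arctan (tanh (a/2) * tanh (b/2))"
proof -
  have pi1: "pi \<le> 3.1416" "3.1415 \<le> pi" using pi_approx by auto
  have ta: "(a/2) * (0.71/0.9) \<le> tanh (a/2)"
  proof -
    have "(a/2) * (tanh 0.9 / 0.9) \<le> tanh (a/2)" using a by (intro tanh_lin_lower) auto
    moreover have "(a/2) * (0.71/0.9) \<le> (a/2) * (tanh 0.9 / 0.9)"
      using tanh_09 a by (intro mult_left_mono) auto
    ultimately show ?thesis by linarith
  qed
  have tb: "(b/2) * (0.915/(pi/2)) \<le> tanh (b/2)"
  proof -
    have "(b/2) * (tanh (pi/2) / (pi/2)) \<le> tanh (b/2)" using b by (intro tanh_lin_lower) auto
    moreover have "(b/2) * (0.915/(pi/2)) \<le> (b/2) * (tanh (pi/2) / (pi/2))"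
      using tanh_pi2 b by (intro mult_left_mono divide_right_mono) auto
    ultimately show ?thesis by linarith
  qed
  have tb2: "(b/2) * (0.915/(3.1416/2)) \<le> (b/2) * (0.915/(pi/2))"
    using b pi1 by (intro mult_left_mono divide_left_mono) auto
  define \<kappa> :: real where "\<kappa> = (0.71/1.8) * (0.915/3.1416)"
  define z where "z = \<kappa> * a * b"
  have z0: "0 \<le> z" using a b by (simp add: z_def \<kappa>_def)
  have zle: "z \<le> tanh (a/2) * tanh (b/2)"
  proof -
    have "z = ((a/2) * (0.71/0.9)) * ((b/2) * (0.915/(3.1416/2)))" by (simp add: z_def \<kappa>_def)
    also have "\<dots> \<le> tanh (a/2) * tanh (b/2)"
      using ta tb tb2 a b by (intro mult_mono) auto
    finally show ?thesis .
  qed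
  have zup: "z \<le> 0.6497"
  proof -
    have "a * b \<le> 1.8 * pi" using a b by (intro mult_mono) auto
    also have "\<dots> \<le> 1.8 * 3.1416" using pi1 by simp
    finally have "a * b \<le> 1.8 * 3.1416" .
    then have "\<kappa> * (a * b) \<le> \<kappa> * (1.8 * 3.1416)" by (intro mult_left_mono) (auto simp: \<kappa>_def)
    then show ?thesis by (simp add: z_def \<kappa>_def mult.assoc)
  qed
  have "a * b / 5 \<le> 2 * (0.8705 * z)" by (simp add: z_def \<kappa>_def) (use a b in \<open>simp add: field_simps\<close>)
  also have "\<dots> \<le> 2 * (z - z^3/3 + z^5/5 - z^7/7)" using poly_bound[OF z0 zup] by simp
  also have "\<dots> \<le> 2 * arctan z" using arctan_lower[OF z0] by simp
  also have "\<dots> \<le> 2 * arctan (tanh (a/2) * tanh (b/2))" using zle by (simp add: arctan_le_iff)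
  finally show ?thesis .
qed

definition Lc :: "real^2 \<Rightarrow> complex" where "Lc v = Complex (v$1) (v$2)"
definition Lr :: "complex \<Rightarrow> real^2" where "Lr z = vector [Re z, Im z]"
definition Pp :: "real^2 \<Rightarrow> real \<times> real" where "Pp v = (v$1, v$2)"
definition Qp :: "real \<times> real \<Rightarrow> real^2" where "Qp x = vector [fst x, snd x]"

lemma vec2_eq: "(v::real^2) = w \<longleftrightarrow> v$1 = w$1 \<and> v$2 = w$2"
  by (simp add: vec_eq_iff forall_2)

lemma Lr_Lc [simp]: "Lr (Lc v) = v" by (simp add: Lr_def Lc_def vec2_eq)
lemma Lc_Lr [simp]: "Lc (Lr z) = z" by (simp add: Lr_def Lc_def complex_eq_iff)
lemma Pp_Qp [simp]: "Pp (Qp x) = x" by (simp add: Pp_def Qp_def)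
lemma Qp_Pp [simp]: "Qp (Pp v) = v" by (simp add: Pp_def Qp_def vec2_eq)

lemma Lr_nth [simp]: "Lr z $ 1 = Re z" "Lr z $ 2 = Im z" by (simp_all add: Lr_def)

lemma mem_cbox2: "(x::real^2) \<in> cbox u v \<longleftrightarrow> u$1 \<le> x$1 \<and> x$1 \<le> v$1 \<and> u$2 \<le> x$2 \<and> x$2 \<le> v$2"
  by (auto simp: mem_box_cart forall_2)

lemma mem_box2: "(x::real^2) \<in> box u v \<longleftrightarrow> u$1 < x$1 \<and> x$1 < v$1 \<and> u$2 < x$2 \<and> x$2 < v$2"
  by (auto simp: mem_box_cart forall_2)

lemma Lc_cbox: "Lc ` cbox u v = cbox (Lc u) (Lc v)"
proof (intro set_eqI iffI)
  fix z assume "z \<in> Lc ` cbox u v" then show "z \<in> cbox (Lc u) (Lc v)"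
    by (auto simp: cbox_complex_eq mem_cbox2 Lc_def)
next
  fix z assume "z \<in> cbox (Lc u) (Lc v)"
  then have "Lr z \<in> cbox u v" by (auto simp: cbox_complex_eq mem_cbox2 Lc_def Lr_def)
  then show "z \<in> Lc ` cbox u v" by (metis Lc_Lr image_eqI)
qed

lemma Lr_cbox: "Lr ` cbox u v = cbox (Lr u) (Lr v)"
proof (intro set_eqI iffI)
  fix z assume "z \<in> Lr ` cbox u v" then show "z \<in> cbox (Lr u) (Lr v)"
    by (auto simp: cbox_complex_eq mem_cbox2 Lr_def)
next
  fix z assume "z \<in> cbox (Lr u) (Lr v)"
  then have "Lc z \<in> cbox u v" by (auto simp: cbox_complex_eq mem_cbox2 Lc_def Lr_def)
  then show "z \<in> Lr ` cbox u v" by (metis Lr_Lc image_eqI)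
qed

lemma content_cbox2: "Henstock_Kurzweil_Integration.content (cbox u (v::real^2)) = (if u$1 \<le> v$1 \<and> u$2 \<le> v$2 then (v$1 - u$1) * (v$2 - u$2) else 0)"
  by (auto simp: content_cbox_if_cart UNIV_2 mem_cbox2 box_eq_empty(2) mem_box_cart forall_2 Basis_vec_def cart_eq_inner_axis)

lemma content_cbox_complex: "Henstock_Kurzweil_Integration.content (cbox u (v::complex)) = (if Re u \<le> Re v \<and> Im u \<le> Im v then (Re v - Re u) * (Im v - Im u) else 0)"
  by (auto simp: content_cbox_cases Basis_complex_def)

lemma transfer_integral:
  fixes f :: "complex \<Rightarrow> real" and E :: "(real^2) set"
  assumes "bounded E" and "((\<lambda>v. f (Lc v)) has_integral i) E"
  shows "(f has_integral i) (Lc ` E)"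
proof -
  obtain u v where uv: "E \<subseteq> cbox u v" using assms(1) bounded_subset_cbox_symmetric by metis
  let ?phi = "\<lambda>x. if x \<in> E then f (Lc x) else 0"
  have "(?phi has_integral i) (cbox u v)" using assms(2) uv by simp
  then have "((\<lambda>z. ?phi (Lr z)) has_integral (1 / 1) *\<^sub>R i) (Lc ` cbox u v)"
  proof (rule has_integral_twiddle[where g = Lr and h = Lc and r = 1, rotated -1])
    have lin: "linear Lr" unfolding linear_iff Lr_def by (simp add: vec2_eq)
    show "\<And>x. continuous (at x) Lr" using lin by (simp add: linear_continuous_at linear_conv_bounded_linear)
  qed (auto simp: Lr_cbox Lc_cbox content_cbox2 content_cbox_complex)
  moreover have "(\<lambda>z. ?phi (Lr z)) = (\<lambda>z. if z \<in> Lc ` E then f z else 0)"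
  proof -
    have "Lr z \<in> E \<longleftrightarrow> z \<in> Lc ` E" for z
      by (metis Lc_Lr Lr_Lc image_iff)
    then show ?thesis by (auto simp: fun_eq_iff)
  qed
  ultimately have "((\<lambda>z. if z \<in> Lc ` E then f z else 0) has_integral i) (cbox (Lc u) (Lc v))"
    by (simp add: Lc_cbox)
  moreover have "Lc ` E \<subseteq> cbox (Lc u) (Lc v)" using uv Lc_cbox by blast
  ultimately show ?thesis by simp
qed

lemma fubini_box2:
  fixes F :: "real \<Rightarrow> real \<Rightarrow> real"
  assumes cont: "continuous_on (cbox (0,0) (1,1)) (\<lambda>x. F (fst x) (snd x))"
  shows "((\<lambda>v::real^2. F (v$1) (v$2)) has_integral integral {0..1} (\<lambda>p. integral {0..1} (\<lambda>q. F p q))) (box (vec 0) (vec 1))"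
proof -
  let ?psi = "\<lambda>x. F (fst x) (snd x)"
  have int: "?psi integrable_on cbox (0,0) (1,1)"
    using cont by (rule integrable_continuous)
  have "integral (cbox (0,0) (1,1)) ?psi = integral (cbox 0 1) (\<lambda>p. integral (cbox 0 1) (\<lambda>q. ?psi (p, q)))"
    using integral_prod_continuous[OF cont] .
  then have I: "(?psi has_integral integral {0..1} (\<lambda>p. integral {0..1} (\<lambda>q. F p q))) (cbox (0,0) (1,1))"
    using int by (simp add: has_integral_integral)
  have "((\<lambda>v. ?psi (Pp v)) has_integral (1 / 1) *\<^sub>R integral {0..1} (\<lambda>p. integral {0..1} (\<lambda>q. F p q))) (Qp ` cbox (0,0) (1,1))"
  proof (rule has_integral_twiddle[where g = Pp and h = Qp and r = 1, OF _ _ _ _ _ _ _ I])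
    show "\<And>x. continuous (at x) Pp" unfolding Pp_def by (intro continuous_intros)
    show "\<And>u v. \<exists>w z. Pp ` cbox u v = cbox w z"
    proof -
      fix u v :: "real^2"
      have "Pp ` cbox u v = cbox (Pp u) (Pp v)"
      proof (intro set_eqI iffI)
        fix z assume "z \<in> Pp ` cbox u v" then show "z \<in> cbox (Pp u) (Pp v)"
          by (auto simp: mem_cbox2 Pp_def cbox_Pair_eq[symmetric] mem_Times_iff)
      next
        fix z assume "z \<in> cbox (Pp u) (Pp v)"
        then have "Qp z \<in> cbox u v" by (cases z) (auto simp: mem_cbox2 Pp_def Qp_def cbox_Pair_eq[symmetric])
        then show "z \<in> Pp ` cbox u v" by (metis Pp_Qp image_eqI)
      qed
      then show "\<exists>w z. Pp ` cbox u v = cbox w z" by blast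
    qed
    show "\<And>u v. \<exists>w z. Qp ` cbox u v = cbox w z"
    proof -
      fix u v :: "real \<times> real"
      have "Qp ` cbox u v = cbox (Qp u) (Qp v)"
      proof (intro set_eqI iffI)
        fix z assume "z \<in> Qp ` cbox u v" then show "z \<in> cbox (Qp u) (Qp v)"
          by (cases u, cases v) (auto simp: mem_cbox2 Qp_def cbox_Pair_eq[symmetric])
      next
        fix z assume "z \<in> cbox (Qp u) (Qp v)"
        then have "Pp z \<in> cbox u v" by (cases u, cases v) (auto simp: mem_cbox2 Pp_def Qp_def cbox_Pair_eq[symmetric])
        then show "z \<in> Qp ` cbox u v" by (metis Qp_Pp image_eqI)
      qed
      then show "\<exists>w z. Qp ` cbox u v = cbox w z" by blast
    qed
    show "\<And>u v. Henstock_Kurzweil_Integration.content (Pp ` cbox u v) = 1 * Henstock_Kurzweil_Integration.content (cbox u v)"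
    proof -
      fix u v :: "real^2"
      have "Pp ` cbox u v = cbox (u$1, u$2) (v$1, v$2)"
      proof (intro set_eqI iffI)
        fix z assume "z \<in> Pp ` cbox u v" then show "z \<in> cbox (u$1, u$2) (v$1, v$2)"
          by (auto simp: mem_cbox2 Pp_def cbox_Pair_eq)
      next
        fix z assume "z \<in> cbox (u$1, u$2) (v$1, v$2)"
        then have "Qp z \<in> cbox u v" by (cases z) (auto simp: mem_cbox2 Qp_def cbox_Pair_eq)
        then show "z \<in> Pp ` cbox u v" by (metis Pp_Qp image_eqI)
      qed
      then show "Henstock_Kurzweil_Integration.content (Pp ` cbox u v) = 1 * Henstock_Kurzweil_Integration.content (cbox u v)"
        by (simp add: content_Pair content_cbox2)
    qed
  qed auto
  moreover have "Qp ` cbox (0,0) (1,1) = cbox (vec 0) (vec 1)"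
  proof (intro set_eqI iffI)
    fix z assume "z \<in> Qp ` cbox (0,0) (1,1)" then show "z \<in> cbox (vec 0) (vec 1)"
      by (auto simp: mem_cbox2 Qp_def cbox_Pair_eq)
  next
    fix z :: "real^2" assume "z \<in> cbox (vec 0) (vec 1)"
    then have "Pp z \<in> cbox (0,0) (1,1)" by (auto simp: mem_cbox2 Pp_def cbox_Pair_eq)
    then show "z \<in> Qp ` cbox (0,0) (1,1)" by (metis Qp_Pp image_eqI)
  qed
  ultimately show ?thesis by (simp add: Pp_def has_integral_open_interval)
qed

definition det3 :: "real \<Rightarrow> real \<Rightarrow> real \<Rightarrow> real \<Rightarrow> real \<Rightarrow> real \<Rightarrow> real \<Rightarrow> real \<Rightarrow> real \<Rightarrow> real" where
  "det3 x0 x1 x2 y0 y1 y2 z0 z1 z2 = x0 * (y1 * z2 - y2 * z1) - x1 * (y0 * z2 - y2 * z0) + x2 * (y0 * z1 - y1 * z0)"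

definition lor :: "real \<Rightarrow> real \<Rightarrow> real \<Rightarrow> real \<Rightarrow> real \<Rightarrow> real \<Rightarrow> real" where
  "lor x0 x1 x2 y0 y1 y2 = x0 * y0 - x1 * y1 - x2 * y2"

lemma det3_lin:
  "det3 (u1 * a0 + v1 * c0 + w1 * d0) (u1 * a1 + v1 * c1 + w1 * d1) (u1 * a2 + v1 * c2 + w1 * d2)
        (u2 * a0 + v2 * c0 + w2 * d0) (u2 * a1 + v2 * c1 + w2 * d1) (u2 * a2 + v2 * c2 + w2 * d2)
        (u3 * a0 + v3 * c0 + w3 * d0) (u3 * a1 + v3 * c1 + w3 * d1) (u3 * a2 + v3 * c2 + w3 * d2)
   = det3 a0 a1 a2 c0 c1 c2 d0 d1 d2 * det3 u1 v1 w1 u2 v2 w2 u3 v3 w3"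
  unfolding det3_def by algebra

lemma det3_gram:
  "(det3 a0 a1 a2 c0 c1 c2 d0 d1 d2)^2 =
    det3 (lor a0 a1 a2 a0 a1 a2) (lor a0 a1 a2 c0 c1 c2) (lor a0 a1 a2 d0 d1 d2)
         (lor c0 c1 c2 a0 a1 a2) (lor c0 c1 c2 c0 c1 c2) (lor c0 c1 c2 d0 d1 d2)
         (lor d0 d1 d2 a0 a1 a2) (lor d0 d1 d2 c0 c1 c2) (lor d0 d1 d2 d0 d1 d2)"
  unfolding det3_def lor_def by algebra

lemma lor_lin:
  "lor (u * a0 + v * c0 + w * d0) (u * a1 + v * c1 + w * d1) (u * a2 + v * c2 + w * d2)
       (u * a0 + v * c0 + w * d0) (u * a1 + v * c1 + w * d1) (u * a2 + v * c2 + w * d2)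
   = u^2 * lor a0 a1 a2 a0 a1 a2 + v^2 * lor c0 c1 c2 c0 c1 c2 + w^2 * lor d0 d1 d2 d0 d1 d2
     + 2 * u * v * lor a0 a1 a2 c0 c1 c2 + 2 * u * w * lor a0 a1 a2 d0 d1 d2 + 2 * v * w * lor c0 c1 c2 d0 d1 d2"
  unfolding lor_def by algebra

lemma frac_aux: "(b::real) \<noteq> 0 \<Longrightarrow> (A / b) * (B / b) - (C / b) * (D / b) = (A * B - C * D) / (b * b)"
  by (simp add: field_simps)

lemma jac_det3:
  assumes "X0 \<noteq> 0"
  shows "((P1 * X0 - X1 * P0) / X0^2) * ((Q2 * X0 - X2 * Q0) / X0^2) - ((Q1 * X0 - X1 * Q0) / X0^2) * ((P2 * X0 - X2 * P0) / X0^2)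
    = det3 X0 X1 X2 P0 P1 P2 Q0 Q1 Q2 / X0^3"
proof -
  have e: "(P1 * X0 - X1 * P0) * (Q2 * X0 - X2 * Q0) - (Q1 * X0 - X1 * Q0) * (P2 * X0 - X2 * P0) = X0 * det3 X0 X1 X2 P0 P1 P2 Q0 Q1 Q2"
    unfolding det3_def by algebra
  have "X0^2 \<noteq> 0" using assms by simp
  then have "((P1 * X0 - X1 * P0) / X0^2) * ((Q2 * X0 - X2 * Q0) / X0^2) - ((Q1 * X0 - X1 * Q0) / X0^2) * ((P2 * X0 - X2 * P0) / X0^2)
     = X0 * det3 X0 X1 X2 P0 P1 P2 Q0 Q1 Q2 / (X0^2 * X0^2)"
    by (subst frac_aux) (simp_all only: e not_False_eq_True)
  also have "\<dots> = det3 X0 X1 X2 P0 P1 P2 Q0 Q1 Q2 / X0^3" using assms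
    by (simp add: power2_eq_square power3_eq_cube)
  finally show ?thesis .
qed

lemma cov_real2:
  fixes g :: "real^2 \<Rightarrow> real^2" and f :: "real^2 \<Rightarrow> real"
  assumes S: "S \<in> sets lebesgue"
    and der: "\<And>x. x \<in> S \<Longrightarrow> (g has_derivative g' x) (at x within S)"
    and inj: "inj_on g S"
    and ai: "(\<lambda>x. \<bar>det (matrix (g' x))\<bar> * f (g x)) absolutely_integrable_on S"
  shows "(f has_integral (integral S (\<lambda>x. \<bar>det (matrix (g' x))\<bar> * f (g x)))) (g ` S)"
proof -
  let ?I = "integral S (\<lambda>x. \<bar>det (matrix (g' x))\<bar> * f (g x))"
  have main: "(\<lambda>x. \<bar>det (matrix (g' x))\<bar> *\<^sub>R vec (f (g x)) :: real^1) absolutely_integrable_on S \<and>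
           integral S (\<lambda>x. \<bar>det (matrix (g' x))\<bar> *\<^sub>R vec (f (g x))) = (vec ?I :: real^1)
     \<longleftrightarrow> (\<lambda>x. vec (f x) :: real^1) absolutely_integrable_on (g ` S) \<and>
           integral (g ` S) (\<lambda>x. vec (f x)) = (vec ?I :: real^1)"
    by (rule has_absolute_integral_change_of_variables[OF S der inj])
  have lhs: "(\<lambda>x. \<bar>det (matrix (g' x))\<bar> *\<^sub>R vec (f (g x)) :: real^1) absolutely_integrable_on S \<and>
           integral S (\<lambda>x. \<bar>det (matrix (g' x))\<bar> *\<^sub>R vec (f (g x))) = (vec ?I :: real^1)"
    using ai by (simp add: absolutely_integrable_on_1_iff integral_on_1_eq)
  have "(\<lambda>x. vec (f x) :: real^1) absolutely_integrable_on (g ` S) \<and>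
           integral (g ` S) (\<lambda>x. vec (f x)) = (vec ?I :: real^1)"
    using main lhs by blast
  then have "f absolutely_integrable_on (g ` S)" and "integral (g ` S) f = ?I"
    by (simp_all add: absolutely_integrable_on_1_iff integral_on_1_eq)
  then show ?thesis
    using absolutely_integrable_on_def has_integral_integrable_integral by blast
qed

lemma hd_nth: "((\<lambda>v::real^2. v$i) has_derivative (\<lambda>h. h$i)) F"
  by (rule bounded_linear_imp_has_derivative) (rule bounded_linear_vec_nth)

lemma vector2_scaleR: "(vector [a, b] :: real^2) = a *\<^sub>R axis 1 1 + b *\<^sub>R axis 2 1"
  by (simp add: vec2_eq axis_def)

lemma hd_vec2:
  assumes "(f1 has_derivative f1') F" "(f2 has_derivative f2') F"
  shows "((\<lambda>v. vector [f1 v, f2 v] :: real^2) has_derivative (\<lambda>h. vector [f1' h, f2' h])) F"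
  unfolding vector2_scaleR
  by (intro derivative_intros assms)

lemma hd_div:
  fixes N D :: "real^2 \<Rightarrow> real"
  assumes "(N has_derivative N') (at v)" "(D has_derivative D') (at v)" "D v \<noteq> 0"
  shows "((\<lambda>x. N x / D x) has_derivative (\<lambda>h. (N' h * D v - N v * D' h) / (D v)^2)) (at v)"
  apply (rule has_derivative_eq_rhs)
   apply (rule has_derivative_divide[OF assms])
  using assms(3) by (simp add: fun_eq_iff field_simps power2_eq_square)

lemma matrix2_nth:
  fixes f :: "real^2 \<Rightarrow> real^2"
  shows "matrix f $ i $ j = f (axis j 1) $ i"
  by (simp add: matrix_def)

lemma axis2 [simp]: "(axis 1 1 :: real^2) $ 1 = 1" "(axis 1 1 :: real^2) $ 2 = 0"
  "(axis 2 1 :: real^2) $ 1 = 0" "(axis 2 1 :: real^2) $ 2 = 1"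
  by (simp_all add: axis_def)

lemma lor_comm: "lor x0 x1 x2 y0 y1 y2 = lor y0 y1 y2 x0 x1 x2"
  by (simp add: lor_def mult.commute)

lemma abs_from_sq: "(x::real)^2 = y^2 \<Longrightarrow> 0 \<le> y \<Longrightarrow> \<bar>x\<bar> = y"
  by (metis abs_of_nonneg power2_abs power2_eq_iff_nonneg abs_ge_zero)

definition f2 :: "real^2 \<Rightarrow> real" where
  "f2 w = 1 / (1 - ((w$1)^2 + (w$2)^2)) powr (3/2)"

locale tri =
  fixes a0 a1 a2 c0 c1 c2 d0 d1 d2 ca cb sa sb :: real
  assumes hA: "lor a0 a1 a2 a0 a1 a2 = 1" and hC: "lor c0 c1 c2 c0 c1 c2 = 1"
    and hD: "lor d0 d1 d2 d0 d1 d2 = 1"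
    and hAC: "lor a0 a1 a2 c0 c1 c2 = ca" and hCD: "lor c0 c1 c2 d0 d1 d2 = cb"
    and hAD: "lor a0 a1 a2 d0 d1 d2 = ca * cb"
    and a0p: "0 < a0" and c0p: "0 < c0" and d0p: "0 < d0"
    and sap: "0 < sa" and sbp: "0 < sb" and ca2: "ca^2 = 1 + sa^2" and cb2: "cb^2 = 1 + sb^2"
    and cap: "0 < ca" and cbp: "0 < cb"
begin

definition X :: "real \<Rightarrow> real \<Rightarrow> real \<Rightarrow> real \<Rightarrow> real \<Rightarrow> real" where
  "X x y z p q = (1 - p) * x + p * (1 - q) * (y / ca) + p * q * (z / (ca * cb))"
definition Xp :: "real \<Rightarrow> real \<Rightarrow> real \<Rightarrow> real \<Rightarrow> real" where
  "Xp x y z q = - x + (1 - q) * (y / ca) + q * (z / (ca * cb))"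
definition Xq :: "real \<Rightarrow> real \<Rightarrow> real \<Rightarrow> real \<Rightarrow> real" where
  "Xq x y z p = - (p * (y / ca)) + p * (z / (ca * cb))"

lemma X_lin: "X x y z p q = (1 - p) * x + (p * (1 - q) / ca) * y + (p * q / (ca * cb)) * z"
  by (simp add: X_def)
lemma Xp_lin: "Xp x y z q = (-1) * x + ((1 - q) / ca) * y + (q / (ca * cb)) * z"
  by (simp add: Xp_def)
lemma Xq_lin: "Xq x y z p = 0 * x + (- (p / ca)) * y + (p / (ca * cb)) * z"
  by (simp add: Xq_def)

lemma hd_X: "((\<lambda>v::real^2. X x y z (v$1) (v$2)) has_derivative (\<lambda>h. Xp x y z (v$2) * h$1 + Xq x y z (v$1) * h$2)) (at v)"
  unfolding X_def Xp_def Xq_def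
  apply (rule has_derivative_eq_rhs)
   apply (rule derivative_intros hd_nth)+
  by (simp add: fun_eq_iff algebra_simps)

definition x0 :: "real^2 \<Rightarrow> real" where "x0 v = X a0 c0 d0 (v$1) (v$2)"
definition x1 :: "real^2 \<Rightarrow> real" where "x1 v = X a1 c1 d1 (v$1) (v$2)"
definition x2 :: "real^2 \<Rightarrow> real" where "x2 v = X a2 c2 d2 (v$1) (v$2)"
definition p0 :: "real^2 \<Rightarrow> real" where "p0 v = Xp a0 c0 d0 (v$2)"
definition p1 :: "real^2 \<Rightarrow> real" where "p1 v = Xp a1 c1 d1 (v$2)"
definition p2 :: "real^2 \<Rightarrow> real" where "p2 v = Xp a2 c2 d2 (v$2)"
definition q0 :: "real^2 \<Rightarrow> real" where "q0 v = Xq a0 c0 d0 (v$1)"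
definition q1 :: "real^2 \<Rightarrow> real" where "q1 v = Xq a1 c1 d1 (v$1)"
definition q2 :: "real^2 \<Rightarrow> real" where "q2 v = Xq a2 c2 d2 (v$1)"

definition g :: "real^2 \<Rightarrow> real^2" where "g v = vector [x1 v / x0 v, x2 v / x0 v]"
definition g' :: "real^2 \<Rightarrow> real^2 \<Rightarrow> real^2" where
  "g' v h = vector [((p1 v * h$1 + q1 v * h$2) * x0 v - x1 v * (p0 v * h$1 + q0 v * h$2)) / (x0 v)^2,
                    ((p2 v * h$1 + q2 v * h$2) * x0 v - x2 v * (p0 v * h$1 + q0 v * h$2)) / (x0 v)^2]"

lemma hd_g: assumes "x0 v \<noteq> 0" shows "(g has_derivative g' v) (at v)"
proof -
  have "((\<lambda>w. vector [x1 w / x0 w, x2 w / x0 w] :: real^2) has_derivative g' v) (at v)"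
    unfolding g'_def
    by (intro hd_vec2 hd_div assms) (simp_all only: x0_def x1_def x2_def p0_def p1_def p2_def q0_def q1_def q2_def hd_X)
  then show ?thesis by (simp add: g_def[abs_def])
qed

lemma det_g': assumes "x0 v \<noteq> 0"
  shows "det (matrix (g' v)) = det3 (x0 v) (x1 v) (x2 v) (p0 v) (p1 v) (p2 v) (q0 v) (q1 v) (q2 v) / (x0 v)^3"
  unfolding det_2 matrix2_nth g'_def using jac_det3[OF assms] by simp

lemma det3_val:
  "det3 (x0 v) (x1 v) (x2 v) (p0 v) (p1 v) (p2 v) (q0 v) (q1 v) (q2 v)
    = det3 a0 a1 a2 c0 c1 c2 d0 d1 d2 * (v$1 / (ca^2 * cb))"
proof -
  have "det3 (x0 v) (x1 v) (x2 v) (p0 v) (p1 v) (p2 v) (q0 v) (q1 v) (q2 v)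
    = det3 a0 a1 a2 c0 c1 c2 d0 d1 d2 * det3 (1 - v$1) (v$1 * (1 - v$2) / ca) (v$1 * v$2 / (ca * cb))
        (-1) ((1 - v$2) / ca) (v$2 / (ca * cb)) 0 (- (v$1 / ca)) (v$1 / (ca * cb))"
    unfolding x0_def x1_def x2_def p0_def p1_def p2_def q0_def q1_def q2_def X_lin Xp_lin Xq_lin
    by (rule det3_lin)
  also have "det3 (1 - v$1) (v$1 * (1 - v$2) / ca) (v$1 * v$2 / (ca * cb))
        (-1) ((1 - v$2) / ca) (v$2 / (ca * cb)) 0 (- (v$1 / ca)) (v$1 / (ca * cb)) = v$1 / (ca^2 * cb)"
    unfolding det3_def using cap cbp by (simp add: field_simps power2_eq_square)
  finally show ?thesis .
qed

lemma det_acd: "\<bar>det3 a0 a1 a2 c0 c1 c2 d0 d1 d2\<bar> = sa * sb"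
proof -
  have "(det3 a0 a1 a2 c0 c1 c2 d0 d1 d2)^2 = det3 1 ca (ca * cb) ca 1 cb (ca * cb) cb 1"
    unfolding det3_gram using hA hC hD hAC hCD hAD
    by (simp add: lor_comm[of c0 c1 c2 a0 a1 a2] lor_comm[of d0 d1 d2 a0 a1 a2] lor_comm[of d0 d1 d2 c0 c1 c2])
  also have "\<dots> = (sa * sb)^2"
  proof -
    have "det3 1 ca (ca * cb) ca 1 cb (ca * cb) cb 1 = (ca^2 - 1) * (cb^2 - 1)"
      unfolding det3_def by (simp add: algebra_simps power2_eq_square)
    then show ?thesis using ca2 cb2 by (simp add: power_mult_distrib)
  qed
  finally show ?thesis using sap sbp by (intro abs_from_sq) auto
qed

definition Qf :: "real \<Rightarrow> real \<Rightarrow> real" where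
  "Qf p q = 1 - p^2 * (sa^2 / ca^2 + sb^2 * q^2 / (ca^2 * cb^2))"

lemma Q_val: "lor (x0 v) (x1 v) (x2 v) (x0 v) (x1 v) (x2 v) = Qf (v$1) (v$2)"
proof -
  have "lor (x0 v) (x1 v) (x2 v) (x0 v) (x1 v) (x2 v)
     = (1 - v$1)^2 * 1 + (v$1 * (1 - v$2) / ca)^2 * 1 + (v$1 * v$2 / (ca * cb))^2 * 1
       + 2 * (1 - v$1) * (v$1 * (1 - v$2) / ca) * ca + 2 * (1 - v$1) * (v$1 * v$2 / (ca * cb)) * (ca * cb)
       + 2 * (v$1 * (1 - v$2) / ca) * (v$1 * v$2 / (ca * cb)) * cb"
    unfolding x0_def x1_def x2_def X_lin lor_lin hA hC hD hAC hCD hAD ..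
  also have "\<dots> = Qf (v$1) (v$2)"
  proof -
    have s1: "sa^2 = ca^2 - 1" and s2: "sb^2 = cb^2 - 1" using ca2 cb2 by simp_all
    show ?thesis unfolding Qf_def s1 s2 using cap cbp
      by (simp add: field_simps power2_eq_square)
  qed
  finally show ?thesis .
qed

lemma ab_val: "sa^2 / ca^2 + sb^2 / (ca^2 * cb^2) = 1 - 1 / (ca^2 * cb^2)"
proof -
  have s1: "sa^2 = ca^2 - 1" and s2: "sb^2 = cb^2 - 1" using ca2 cb2 by simp_all
  show ?thesis unfolding s1 s2 using cap cbp by (simp add: field_simps power2_eq_square)
qed

lemma Qf_pos: assumes "0 \<le> p" "p \<le> 1" "0 \<le> q" "q \<le> 1" shows "0 < Qf p q"
proof -
  have q2: "q^2 \<le> 1" and p2: "p^2 \<le> 1" using assms by (simp_all add: power_le_one)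
  have nn: "0 \<le> sa^2 / ca^2 + sb^2 * q^2 / (ca^2 * cb^2)" by simp
  have "sb^2 * q^2 / (ca^2 * cb^2) \<le> sb^2 / (ca^2 * cb^2)"
    using q2 by (intro divide_right_mono mult_left_le) auto
  then have le: "sa^2 / ca^2 + sb^2 * q^2 / (ca^2 * cb^2) \<le> 1 - 1 / (ca^2 * cb^2)" using ab_val by linarith
  have "p^2 * (sa^2 / ca^2 + sb^2 * q^2 / (ca^2 * cb^2)) \<le> 1 * (1 - 1 / (ca^2 * cb^2))"
    using p2 nn le by (intro mult_mono) auto
  then have "p^2 * (sa^2 / ca^2 + sb^2 * q^2 / (ca^2 * cb^2)) \<le> 1 - 1 / (ca^2 * cb^2)" by simp
  moreover have "0 < 1 / (ca^2 * cb^2)" using cap cbp by simp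
  ultimately show ?thesis unfolding Qf_def by linarith
qed

lemma x0_pos: assumes "0 < v$1" "v$1 < 1" "0 \<le> v$2" "v$2 \<le> 1" shows "0 < x0 v"
proof -
  have "0 < (1 - v$1) * a0" using assms a0p by simp
  moreover have "0 \<le> v$1 * (1 - v$2) * (c0 / ca)" using assms c0p cap by simp
  moreover have "0 \<le> v$1 * v$2 * (d0 / (ca * cb))" using assms d0p cap cbp by simp
  ultimately show ?thesis unfolding x0_def X_def by linarith
qed

definition Cc :: real where "Cc = sa * sb / (ca^2 * cb)"
definition Fd :: "real \<Rightarrow> real \<Rightarrow> real" where "Fd p q = Cc * p / (Qf p q) powr (3/2)"

lemma pulled: assumes "v \<in> box (vec 0) (vec 1)"
  shows "\<bar>det (matrix (g' v))\<bar> * f2 (g v) = Fd (v$1) (v$2)"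
proof -
  have v: "0 < v$1" "v$1 < 1" "0 < v$2" "v$2 < 1" using assms by (simp_all add: mem_box2)
  have X0: "0 < x0 v" using x0_pos v by simp
  define Q where "Q = Qf (v$1) (v$2)"
  have Q: "0 < Q" unfolding Q_def using v by (intro Qf_pos) auto
  have Qe: "(x0 v)^2 - (x1 v)^2 - (x2 v)^2 = Q" using Q_val[of v] by (simp add: Q_def lor_def power2_eq_square)
  have base: "1 - ((g v $ 1)^2 + (g v $ 2)^2) = Q / (x0 v)^2"
    using X0 Qe[symmetric] by (simp add: g_def field_simps power2_eq_square)
  have f2g: "f2 (g v) = (x0 v)^3 / (Q * sqrt Q)"
  proof -
    have "f2 (g v) = 1 / ((Q / (x0 v)^2) * sqrt (Q / (x0 v)^2))"
      unfolding f2_def base using Q X0 by (subst powr32) auto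
    also have "sqrt (Q / (x0 v)^2) = sqrt Q / x0 v" using X0 by (simp add: real_sqrt_divide)
    finally show ?thesis using X0 Q by (simp add: field_simps power2_eq_square power3_eq_cube)
  qed
  have dg: "\<bar>det (matrix (g' v))\<bar> = sa * sb * v$1 / (ca^2 * cb) / (x0 v)^3"
    unfolding det_g'[OF X0[THEN less_imp_neq, symmetric]] det3_val abs_divide abs_mult det_acd
    using v X0 cap cbp by simp
  show ?thesis unfolding dg f2g Fd_def Cc_def Q_def[symmetric] powr32[OF Q]
    using X0 Q by (simp add: field_simps)
qed

end

lemma det3_cramer1: "det3 (e1 * a0 + e2 * c0 + e3 * d0) (e1 * a1 + e2 * c1 + e3 * d1) (e1 * a2 + e2 * c2 + e3 * d2) c0 c1 c2 d0 d1 d2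
   = e1 * det3 a0 a1 a2 c0 c1 c2 d0 d1 d2"
  unfolding det3_def by algebra
lemma det3_cramer2: "det3 a0 a1 a2 (e1 * a0 + e2 * c0 + e3 * d0) (e1 * a1 + e2 * c1 + e3 * d1) (e1 * a2 + e2 * c2 + e3 * d2) d0 d1 d2
   = e2 * det3 a0 a1 a2 c0 c1 c2 d0 d1 d2"
  unfolding det3_def by algebra
lemma det3_cramer3: "det3 a0 a1 a2 c0 c1 c2 (e1 * a0 + e2 * c0 + e3 * d0) (e1 * a1 + e2 * c1 + e3 * d1) (e1 * a2 + e2 * c2 + e3 * d2)
   = e3 * det3 a0 a1 a2 c0 c1 c2 d0 d1 d2"
  unfolding det3_def by algebra

context tri begin

lemma det_acd_nz: "det3 a0 a1 a2 c0 c1 c2 d0 d1 d2 \<noteq> 0"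
  using det_acd sap sbp by auto

lemma lin_indep:
  assumes "e1 * a0 + e2 * c0 + e3 * d0 = 0" "e1 * a1 + e2 * c1 + e3 * d1 = 0" "e1 * a2 + e2 * c2 + e3 * d2 = 0"
  shows "e1 = 0 \<and> e2 = 0 \<and> e3 = 0"
proof -
  have "e1 * det3 a0 a1 a2 c0 c1 c2 d0 d1 d2 = 0"
    using det3_cramer1[of e1 a0 e2 c0 e3 d0 a1 c1 d1 a2 c2 d2] assms by (simp add: det3_def)
  moreover have "e2 * det3 a0 a1 a2 c0 c1 c2 d0 d1 d2 = 0"
    using det3_cramer2[of a0 a1 a2 e1 e2 c0 e3 d0 c1 d1 c2 d2] assms by (simp add: det3_def)
  moreover have "e3 * det3 a0 a1 a2 c0 c1 c2 d0 d1 d2 = 0"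
    using det3_cramer3[of a0 a1 a2 c0 c1 c2 e1 e2 e3 d0 d1 d2] assms by (simp add: det3_def)
  ultimately show ?thesis using det_acd_nz by simp
qed

lemma inj_g: "inj_on g (box (vec 0) (vec 1))"
proof (rule inj_onI)
  fix v w :: "real^2"
  assume v: "v \<in> box (vec 0) (vec 1)" and w: "w \<in> box (vec 0) (vec 1)" and gg: "g v = g w"
  have vv: "0 < v$1" "v$1 < 1" "0 < v$2" "v$2 < 1" using v by (simp_all add: mem_box2)
  have ww: "0 < w$1" "w$1 < 1" "0 < w$2" "w$2 < 1" using w by (simp_all add: mem_box2)
  have X0v: "0 < x0 v" and X0w: "0 < x0 w" using x0_pos vv ww by auto
  define t where "t = x0 w / x0 v"
  have tp: "0 < t" using X0v X0w by (simp add: t_def)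
  have e0: "x0 w = t * x0 v" using X0v by (simp add: t_def)
  have e1: "x1 w = t * x1 v"
  proof -
    have "x1 v / x0 v = x1 w / x0 w" using gg by (simp add: g_def vec2_eq)
    then show ?thesis using X0v X0w by (simp add: t_def field_simps)
  qed
  have e2: "x2 w = t * x2 v"
  proof -
    have "x2 v / x0 v = x2 w / x0 w" using gg by (simp add: g_def vec2_eq)
    then show ?thesis using X0v X0w by (simp add: t_def field_simps)
  qed
  define p where "p = v$1" define q where "q = v$2"
  define p' where "p' = w$1" define q' where "q' = w$2"
  define E1 where "E1 = (1 - p') - t * (1 - p)"
  define E2 where "E2 = p' * (1 - q') / ca - t * (p * (1 - q) / ca)"
  define E3 where "E3 = p' * q' / (ca * cb) - t * (p * q / (ca * cb))"
  have "E1 * a0 + E2 * c0 + E3 * d0 = 0" using e0 unfolding x0_def X_lin E1_def E2_def E3_def p_def q_def p'_def q'_def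
    by (simp add: algebra_simps)
  moreover have "E1 * a1 + E2 * c1 + E3 * d1 = 0" using e1 unfolding x1_def X_lin E1_def E2_def E3_def p_def q_def p'_def q'_def
    by (simp add: algebra_simps)
  moreover have "E1 * a2 + E2 * c2 + E3 * d2 = 0" using e2 unfolding x2_def X_lin E1_def E2_def E3_def p_def q_def p'_def q'_def
    by (simp add: algebra_simps)
  ultimately have E: "E1 = 0" "E2 = 0" "E3 = 0" using lin_indep by blast+
  have E1': "1 - p' = t * (1 - p)" using E(1) by (simp add: E1_def)
  have E2': "p' * (1 - q') = t * (p * (1 - q))"
  proof -
    have "p' * (1 - q') / ca = t * (p * (1 - q) / ca)" using E(2) by (simp add: E2_def)
    then show ?thesis using cap by (simp add: field_simps)
  qed
  have E3': "p' * q' = t * (p * q)"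
  proof -
    have "p' * q' / (ca * cb) = t * (p * q / (ca * cb))" using E(3) by (simp add: E3_def)
    then show ?thesis using cap cbp by (simp add: field_simps)
  qed
  have "1 = (1 - p') + p' * (1 - q') + p' * q'" by (simp add: algebra_simps)
  also have "\<dots> = t * (1 - p) + t * (p * (1 - q)) + t * (p * q)" using E1' E2' E3' by simp
  also have "\<dots> = t" by (simp add: algebra_simps)
  finally have "1 = t" .
  then have pp: "p' = p" using E1' by simp
  have "p' * q' = p * q" using E3' \<open>1 = t\<close> by simp
  then have "q' = q" using pp vv by (simp add: p_def)
  then show "v = w" using pp by (simp add: vec2_eq p_def q_def p'_def q'_def)
qed

lemma Fd_cont: "continuous_on (cbox (0,0) (1,1)) (\<lambda>x. Fd (fst x) (snd x))"
proof -
  have pos: "\<And>x. x \<in> cbox (0::real,0::real) (1,1) \<Longrightarrow> 0 < Qf (fst x) (snd x)"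
    by (auto simp: cbox_Pair_eq intro!: Qf_pos)
  have "continuous_on (cbox (0::real,0::real) (1,1)) (\<lambda>x. Qf (fst x) (snd x))"
    unfolding Qf_def using cap cbp by (intro continuous_intros) auto
  then show ?thesis unfolding Fd_def using pos
    by (auto intro!: continuous_intros simp: less_imp_neq[symmetric])
qed

definition al :: real where "al = sa^2 / ca^2"
definition mm :: real where "mm = sb / (sa * cb)"

lemma al_pos: "0 < al" using sap cap by (simp add: al_def)
lemma mm_pos: "0 < mm" using sap sbp cbp by (simp add: mm_def)
lemma s_val: "al * (1 + mm^2) = 1 - 1 / (ca^2 * cb^2)"
proof -
  have "al * (1 + mm^2) = sa^2 / ca^2 + sb^2 / (ca^2 * cb^2)"
    using sap cbp cap by (simp add: al_def mm_def field_simps power2_eq_square)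
  then show ?thesis using ab_val by simp
qed
lemma Cc_val: "Cc = mm * al"
  using sap cbp cap by (simp add: Cc_def al_def mm_def field_simps power2_eq_square)
lemma Qf_val: "Qf p q = (1 - al * p^2) - (al * mm^2 * p^2) * q^2"
  using sap cbp cap by (simp add: Qf_def al_def mm_def field_simps power2_eq_square)

lemma inner_val: assumes "p \<in> {0..1}"
  shows "integral {0..1} (\<lambda>q. Fd p q) = mm * al * p / ((1 - al * p^2) * sqrt (1 - al * (1 + mm^2) * p^2))"
proof -
  have B0: "0 \<le> al * mm^2 * p^2" using al_pos by simp
  have "0 < Qf p 1" using assms by (intro Qf_pos) auto
  then have B1: "al * mm^2 * p^2 < 1 - al * p^2" by (simp add: Qf_val)
  have "((\<lambda>q. 1 / ((1 - al * p^2) - (al * mm^2 * p^2) * q^2) powr (3/2)) has_integral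
     (1 / ((1 - al * p^2) * sqrt ((1 - al * p^2) - al * mm^2 * p^2)))) {0..1}"
    by (rule inner_int[OF B0 B1])
  then have "((\<lambda>q. (Cc * p) * (1 / ((1 - al * p^2) - (al * mm^2 * p^2) * q^2) powr (3/2))) has_integral
     (Cc * p) * (1 / ((1 - al * p^2) * sqrt ((1 - al * p^2) - al * mm^2 * p^2)))) {0..1}"
    by (rule has_integral_mult_right)
  moreover have "(\<lambda>q. (Cc * p) * (1 / ((1 - al * p^2) - (al * mm^2 * p^2) * q^2) powr (3/2))) = (\<lambda>q. Fd p q)"
    by (simp add: fun_eq_iff Fd_def Qf_val)
  moreover have "(Cc * p) * (1 / ((1 - al * p^2) * sqrt ((1 - al * p^2) - al * mm^2 * p^2)))
      = mm * al * p / ((1 - al * p^2) * sqrt (1 - al * (1 + mm^2) * p^2))"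
    by (simp add: Cc_val algebra_simps)
  ultimately show ?thesis by (simp add: integral_unique)
qed

lemma box_integral:
  "((\<lambda>v::real^2. Fd (v$1) (v$2)) has_integral (arctan (sa * cb / sb) - arctan (sa / (ca * sb)))) (box (vec 0) (vec 1))"
proof -
  have F: "((\<lambda>v::real^2. Fd (v$1) (v$2)) has_integral integral {0..1} (\<lambda>p. integral {0..1} (\<lambda>q. Fd p q))) (box (vec 0) (vec 1))"
    by (rule fubini_box2[OF Fd_cont])
  have "integral {0..1} (\<lambda>p. integral {0..1} (\<lambda>q. Fd p q))
      = integral {0..1} (\<lambda>p. mm * al * p / ((1 - al * p^2) * sqrt (1 - al * (1 + mm^2) * p^2)))"
    by (rule integral_cong) (rule inner_val)
  also have "\<dots> = arctan (1/mm) - arctan (sqrt (1 - al * (1 + mm^2)) / mm)"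
  proof (rule integral_unique, rule outer_int[OF al_pos mm_pos])
    show "al * (1 + mm^2) < 1" unfolding s_val using cap cbp by simp
  qed
  also have "\<dots> = arctan (sa * cb / sb) - arctan (sa / (ca * sb))"
  proof -
    have sq: "sqrt (1 - al * (1 + mm^2)) = 1 / (ca * cb)"
      unfolding s_val using cap cbp by (simp add: real_sqrt_divide power_mult_distrib[symmetric])
    have e2: "sqrt (1 - al * (1 + mm^2)) / mm = sa / (ca * sb)"
      unfolding sq using sap sbp cap cbp by (simp add: mm_def field_simps)
    have e1: "1 / mm = sa * cb / sb" by (simp add: mm_def)
    show ?thesis by (simp only: e1 e2)
  qed
  finally show ?thesis using F by simp
qed

lemma core:
  "(f2 has_integral (arctan (sa * cb / sb) - arctan (sa / (ca * sb)))) (g ` box (vec 0) (vec 1))"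
proof -
  let ?S = "box (vec 0) (vec 1) :: (real^2) set"
  have S: "?S \<in> sets lebesgue" by (rule fmeasurableD[OF lmeasurable_box])
  have der: "(g has_derivative g' x) (at x within ?S)" if "x \<in> ?S" for x
  proof -
    have "0 < x0 x" using that x0_pos by (auto simp: mem_box2)
    then have "(g has_derivative g' x) (at x)" using hd_g by simp
    then show ?thesis by (rule has_derivative_at_withinI)
  qed
  have eq: "\<And>x. x \<in> ?S \<Longrightarrow> \<bar>det (matrix (g' x))\<bar> * f2 (g x) = Fd (x$1) (x$2)" by (rule pulled)
  have "(\<lambda>v. Fd (v$1) (v$2)) integrable_on ?S" using box_integral by blast
  moreover have "(\<lambda>x. \<bar>det (matrix (g' x))\<bar> * f2 (g x)) integrable_on ?S \<longleftrightarrow> (\<lambda>v. Fd (v$1) (v$2)) integrable_on ?S"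
    by (rule integrable_cong) (rule eq)
  ultimately have "(\<lambda>x. \<bar>det (matrix (g' x))\<bar> * f2 (g x)) integrable_on ?S" by blast
  moreover have "\<And>x. x \<in> ?S \<Longrightarrow> 0 \<le> \<bar>det (matrix (g' x))\<bar> * f2 (g x)"
  proof -
    fix x assume x: "x \<in> ?S"
    have "0 \<le> f2 (g x)" by (simp add: f2_def)
    then show "0 \<le> \<bar>det (matrix (g' x))\<bar> * f2 (g x)" by simp
  qed
  ultimately have ai: "(\<lambda>x. \<bar>det (matrix (g' x))\<bar> * f2 (g x)) absolutely_integrable_on ?S"
    by (rule nonnegative_absolutely_integrable_1)
  have "(f2 has_integral (integral ?S (\<lambda>x. \<bar>det (matrix (g' x))\<bar> * f2 (g x)))) (g ` ?S)"
    by (rule cov_real2[OF S der inj_g ai])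
  moreover have "integral ?S (\<lambda>x. \<bar>det (matrix (g' x))\<bar> * f2 (g x)) = integral ?S (\<lambda>v. Fd (v$1) (v$2))"
    using eq by (rule integral_cong)
  moreover have "integral ?S (\<lambda>v. Fd (v$1) (v$2)) = arctan (sa * cb / sb) - arctan (sa / (ca * sb))"
    using box_integral by (rule integral_unique)
  ultimately show ?thesis by simp
qed

end

definition nn :: "complex \<Rightarrow> real" where "nn P = 1 - ((Re P)^2 + (Im P)^2)"
definition l0 :: "complex \<Rightarrow> real" where "l0 P = 1 / sqrt (nn P)"
definition l1 :: "complex \<Rightarrow> real" where "l1 P = Re P / sqrt (nn P)"
definition l2 :: "complex \<Rightarrow> real" where "l2 P = Im P / sqrt (nn P)"

lemma normsq: "(norm z)^2 = (Re z)^2 + (Im z)^2"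
  by (simp add: norm_complex_def)

lemma disc_nn: "P \<in> klein_disc \<Longrightarrow> 0 < nn P"
proof -
  assume "P \<in> klein_disc"
  then have n1: "norm P < 1" by (simp add: klein_disc_def dist_norm)
  have "norm P * norm P < 1 * 1" using n1 by (intro mult_strict_mono') auto
  then have n2: "(norm P)^2 < 1" by (simp add: power2_eq_square)
  have "nn P = 1 - (norm P)^2" by (simp add: nn_def normsq)
  then show ?thesis using n2 by linarith
qed

lemma lor_ll:
  assumes "0 < nn P" "0 < nn Q"
  shows "lor (l0 P) (l1 P) (l2 P) (l0 Q) (l1 Q) (l2 Q) = (1 - (Re P * Re Q + Im P * Im Q)) / sqrt (nn P * nn Q)"
  using assms by (simp add: lor_def l0_def l1_def l2_def real_sqrt_mult field_simps)

lemma lor_ll_self: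
  assumes "0 < nn P"
  shows "lor (l0 P) (l1 P) (l2 P) (l0 P) (l1 P) (l2 P) = 1"
proof -
  have "lor (l0 P) (l1 P) (l2 P) (l0 P) (l1 P) (l2 P) = (1 - (Re P * Re P + Im P * Im P)) / sqrt (nn P * nn P)"
    by (rule lor_ll[OF assms assms])
  also have "\<dots> = 1" using assms by (simp add: nn_def power2_eq_square)
  finally show ?thesis .
qed

lemma l0_pos: "0 < nn P \<Longrightarrow> 0 < l0 P" by (simp add: l0_def)

lemma kd_ge1:
  assumes "0 < nn P" "0 < nn Q"
  shows "1 \<le> (1 - (Re P * Re Q + Im P * Im Q)) / sqrt (nn P * nn Q)"
proof -
  define x1 where "x1 = Re P" define y1 where "y1 = Im P"
  define x2 where "x2 = Re Q" define y2 where "y2 = Im Q"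
  have n1: "x1^2 + y1^2 < 1" and n2: "x2^2 + y2^2 < 1" using assms by (simp_all add: nn_def x1_def y1_def x2_def y2_def)
  have pos: "0 < 1 - (x1 * x2 + y1 * y2)"
  proof -
    have "(x1 * x2 + y1 * y2)^2 \<le> (x1^2 + y1^2) * (x2^2 + y2^2)"
    proof -
      have "(x1^2 + y1^2) * (x2^2 + y2^2) - (x1 * x2 + y1 * y2)^2 = (x1 * y2 - x2 * y1)^2"
        by (simp add: algebra_simps power2_eq_square)
      moreover have "0 \<le> (x1 * y2 - x2 * y1)^2" by simp
      ultimately show ?thesis by linarith
    qed
    also have "\<dots> < 1 * 1" using n1 n2 by (intro mult_strict_mono') auto
    finally have "(x1 * x2 + y1 * y2)^2 < 1" by simp
    then have "\<bar>x1 * x2 + y1 * y2\<bar> < 1" using abs_square_less_1 by blast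
    then show ?thesis by simp
  qed
  have key: "(1 - (x1^2 + y1^2)) * (1 - (x2^2 + y2^2)) \<le> (1 - (x1 * x2 + y1 * y2))^2"
  proof -
    have id: "(1 - (x1 * x2 + y1 * y2))^2 - (1 - (x1^2 + y1^2)) * (1 - (x2^2 + y2^2))
        = (x2 - x1)^2 + (y2 - y1)^2 - (x1 * (y2 - y1) - y1 * (x2 - x1))^2"
      by (simp add: algebra_simps power2_eq_square)
    have lag: "(x1^2 + y1^2) * ((x2 - x1)^2 + (y2 - y1)^2) - (x1 * (y2 - y1) - y1 * (x2 - x1))^2
        = (x1 * (x2 - x1) + y1 * (y2 - y1))^2"
      by (simp add: algebra_simps power2_eq_square)
    have "(x1 * (y2 - y1) - y1 * (x2 - x1))^2 \<le> (x1^2 + y1^2) * ((x2 - x1)^2 + (y2 - y1)^2)"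
      using lag zero_le_power2[of "x1 * (x2 - x1) + y1 * (y2 - y1)"] by linarith
    also have "\<dots> \<le> 1 * ((x2 - x1)^2 + (y2 - y1)^2)"
      using n1 by (intro mult_right_mono) auto
    finally show ?thesis using id by simp
  qed
  have "sqrt (nn P * nn Q) \<le> 1 - (x1 * x2 + y1 * y2)"
  proof -
    have "sqrt (nn P * nn Q) \<le> sqrt ((1 - (x1 * x2 + y1 * y2))^2)"
      using key by (intro real_sqrt_le_mono) (simp add: nn_def x1_def y1_def x2_def y2_def)
    also have "\<dots> = 1 - (x1 * x2 + y1 * y2)" using pos by simp
    finally show ?thesis .
  qed
  moreover have "0 < sqrt (nn P * nn Q)" using assms by simp
  ultimately show ?thesis by (simp add: x1_def y1_def x2_def y2_def)
qed

lemma cosh_kd: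
  assumes "P \<in> klein_disc" "Q \<in> klein_disc"
  shows "cosh (klein_dist P Q) = lor (l0 P) (l1 P) (l2 P) (l0 Q) (l1 Q) (l2 Q)"
proof -
  have nP: "0 < nn P" and nQ: "0 < nn Q" using assms disc_nn by auto
  have e: "(1 - P \<bullet> Q) / sqrt ((1 - (norm P)\<^sup>2) * (1 - (norm Q)\<^sup>2))
      = (1 - (Re P * Re Q + Im P * Im Q)) / sqrt (nn P * nn Q)"
    by (simp add: inner_complex_def normsq nn_def)
  show ?thesis unfolding klein_dist_def e lor_ll[OF nP nQ]
    using kd_ge1[OF nP nQ] by simp
qed

lemma right_angle:
  assumes "A \<in> klein_disc" "B \<in> klein_disc" "C \<in> klein_disc"
    and "klein_metric C (A - C) (B - C) = 0"
  shows "lor (l0 A) (l1 A) (l2 A) (l0 B) (l1 B) (l2 B)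
     = lor (l0 A) (l1 A) (l2 A) (l0 C) (l1 C) (l2 C) * lor (l0 C) (l1 C) (l2 C) (l0 B) (l1 B) (l2 B)"
proof -
  have nA: "0 < nn A" and nB: "0 < nn B" and nC: "0 < nn C" using assms disc_nn by auto
  define xa where "xa = Re A" define ya where "ya = Im A"
  define xb where "xb = Re B" define yb where "yb = Im B"
  define xc where "xc = Re C" define yc where "yc = Im C"
  have m: "((xa - xc) * (xb - xc) + (ya - yc) * (yb - yc)) / nn C
      + (xc * (xa - xc) + yc * (ya - yc)) * (xc * (xb - xc) + yc * (yb - yc)) / (nn C)^2 = 0"
    using assms(4) by (simp add: klein_metric_def inner_complex_def normsq nn_def xa_def ya_def xb_def yb_def xc_def yc_def)
  have m2: "((xa - xc) * (xb - xc) + (ya - yc) * (yb - yc)) * nn C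
      + (xc * (xa - xc) + yc * (ya - yc)) * (xc * (xb - xc) + yc * (yb - yc)) = 0"
  proof -
    have gen: "\<And>U V n::real. n \<noteq> 0 \<Longrightarrow> (U / n + V / n^2) * n^2 = U * n + V"
      by (simp add: field_simps power2_eq_square)
    have "(((xa - xc) * (xb - xc) + (ya - yc) * (yb - yc)) / nn C
      + (xc * (xa - xc) + yc * (ya - yc)) * (xc * (xb - xc) + yc * (yb - yc)) / (nn C)^2) * (nn C)^2 = 0"
      using m by simp
    then show ?thesis unfolding gen[OF nC[THEN less_imp_neq, symmetric]] .
  qed
  have ncd: "nn C = 1 - xc^2 - yc^2" by (simp add: nn_def xc_def yc_def algebra_simps)
  have key: "(1 - (xa * xb + ya * yb)) * nn C = (1 - (xa * xc + ya * yc)) * (1 - (xc * xb + yc * yb))"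
  proof -
    have "(1 - (xa * xb + ya * yb)) * nn C - (1 - (xa * xc + ya * yc)) * (1 - (xc * xb + yc * yb))
      = - (((xa - xc) * (xb - xc) + (ya - yc) * (yb - yc)) * nn C
      + (xc * (xa - xc) + yc * (ya - yc)) * (xc * (xb - xc) + yc * (yb - yc)))"
      unfolding ncd by (simp add: algebra_simps power2_eq_square)
    then show ?thesis using m2 by simp
  qed
  have sC: "sqrt (nn C) * sqrt (nn C) = nn C" using nC by simp
  have gen: "\<And>K1 K2 K3 n sA sB sC::real. sC * sC = n \<Longrightarrow> 0 < n \<Longrightarrow> 0 < sA \<Longrightarrow> 0 < sB \<Longrightarrow> 0 < sC \<Longrightarrow>
      K1 * n = K2 * K3 \<Longrightarrow> K1 / (sA * sB) = K2 / (sA * sC) * (K3 / (sC * sB))"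
  proof -
    fix K1 K2 K3 n sA sB sC :: real
    assume h: "sC * sC = n" "0 < n" "0 < sA" "0 < sB" "0 < sC" "K1 * n = K2 * K3"
    have "K2 / (sA * sC) * (K3 / (sC * sB)) = (K2 * K3) / (sA * sB * (sC * sC))" by (simp add: field_simps)
    also have "\<dots> = (K1 * n) / (sA * sB * n)" by (simp only: h(1) h(6))
    also have "\<dots> = K1 / (sA * sB)" using h(2) by simp
    finally show "K1 / (sA * sB) = K2 / (sA * sC) * (K3 / (sC * sB))" by simp
  qed
  show ?thesis
    unfolding lor_ll[OF nA nB] lor_ll[OF nA nC] lor_ll[OF nC nB] real_sqrt_mult
    using gen[OF sC nC _ _ _ key] nA nB nC
    by (simp add: xa_def ya_def xb_def yb_def xc_def yc_def)
qed

lemma tanh_half_aux: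
  fixes F :: real assumes F: "0 < F"
  shows "((F - inverse F) / 2) / ((F + inverse F) / 2 + 1) = (F - 1) / (F + 1)"
proof -
  define G where "G = inverse F"
  have G: "0 < G" using F by (simp add: G_def)
  have FG: "F * G = 1" using F by (simp add: G_def)
  have d1: "F + G + 2 \<noteq> 0" using F G by linarith
  have d2: "F + 1 \<noteq> 0" using F by linarith
  have e1: "((F - G) / 2) / ((F + G) / 2 + 1) = (F - G) / (F + G + 2)"
  proof -
    have "(F + G) / 2 + 1 = (F + G + 2) / 2" by simp
    then show ?thesis by simp
  qed
  have e2: "(F - G) * (F + 1) = (F - 1) * (F + G + 2)"
  proof -
    have "(F - G) * (F + 1) = F * F + F - F * G - G" by (simp add: algebra_simps)
    also have "\<dots> = F * F + F - 1 - G" using FG by simp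
    also have "\<dots> = F * F + F * G + 2 * F - F - G - 2" using FG by simp
    also have "\<dots> = (F - 1) * (F + G + 2)" by (simp add: algebra_simps)
    finally show ?thesis .
  qed
  have "(F - G) / (F + G + 2) = (F - 1) / (F + 1)"
    using e2 d1 d2 by (simp add: frac_eq_eq)
  then show ?thesis using e1 by (simp add: G_def)
qed

lemma tanh_half: "tanh ((x::real)/2) = sinh x / (cosh x + 1)"
proof -
  define F where "F = exp x"
  have F: "0 < F" by (simp add: F_def)
  have em: "exp (-x) = inverse F" by (simp add: F_def exp_minus)
  have t: "tanh (x/2) = (F - 1) / (F + 1)" using tanh_via_exp[of "x/2"] by (simp add: F_def)
  have s: "sinh x = (F - inverse F) / 2" "cosh x = (F + inverse F) / 2"
    by (simp_all add: sinh_def cosh_def F_def[symmetric] em scaleR_conv_of_real)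
  show ?thesis by (simp only: t s tanh_half_aux[OF F])
qed

lemma lor_lin2: "lor x0 x1 x2 (s * y0 + t * z0) (s * y1 + t * z1) (s * y2 + t * z2)
    = s * lor x0 x1 x2 y0 y1 y2 + t * lor x0 x1 x2 z0 z1 z2"
  by (simp add: lor_def algebra_simps)

lemma lor_self2: "lor (s * y0 + t * z0) (s * y1 + t * z1) (s * y2 + t * z2) (s * y0 + t * z0) (s * y1 + t * z1) (s * y2 + t * z2)
    = s^2 * lor y0 y1 y2 y0 y1 y2 + 2 * s * t * lor y0 y1 y2 z0 z1 z2 + t^2 * lor z0 z1 z2 z0 z1 z2"
  by (simp add: lor_def algebra_simps power2_eq_square)

lemma hyp_split:
  fixes x y :: real assumes x: "0 \<le> x" and y: "0 < y"
  shows "sinh x / sinh (x+y) + (sinh y / sinh (x+y)) * cosh (x+y) = cosh y"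
    and "(sinh x / sinh (x+y))^2 + 2 * (sinh x / sinh (x+y)) * (sinh y / sinh (x+y)) * cosh (x+y)
         + (sinh y / sinh (x+y))^2 = 1"
proof -
  have sp: "0 < sinh (x+y)" using x y by simp
  define sx where "sx = sinh x" define cx where "cx = cosh x"
  define sy where "sy = sinh y" define cy where "cy = cosh y"
  have cx2: "cx^2 = sx^2 + 1" and cy2: "cy^2 = sy^2 + 1" by (simp_all add: sx_def cx_def sy_def cy_def cosh_square_eq)
  have sb: "sinh (x+y) = sx * cy + cx * sy" by (simp add: sinh_add sx_def cx_def sy_def cy_def)
  have cb: "cosh (x+y) = cx * cy + sx * sy" by (simp add: cosh_add sx_def cx_def sy_def cy_def)
  define S where "S = sinh (x+y)"
  have S: "S \<noteq> 0" using sp by (simp add: S_def)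
  have e1: "sx + sy * (cx * cy + sx * sy) = cy * (sx * cy + cx * sy)"
  proof -
    have "sx + sy * (cx * cy + sx * sy) = sx * (1 + sy^2) + cx * cy * sy" by (simp add: algebra_simps power2_eq_square)
    also have "\<dots> = sx * cy^2 + cx * cy * sy" using cy2 by simp
    also have "\<dots> = cy * (sx * cy + cx * sy)" by (simp add: algebra_simps power2_eq_square)
    finally show ?thesis .
  qed
  show "sinh x / sinh (x+y) + (sinh y / sinh (x+y)) * cosh (x+y) = cosh y"
  proof -
    have "sinh x / S + (sinh y / S) * cosh (x+y) = (sx + sy * (cx * cy + sx * sy)) / S"
      using S by (simp add: cb sx_def sy_def field_simps)
    also have "\<dots> = cy * S / S" unfolding e1 by (simp add: S_def sb)
    also have "\<dots> = cosh y" using S by (simp add: cy_def)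
    finally show ?thesis by (simp add: S_def)
  qed
  have e2: "sx^2 + 2 * sx * sy * (cx * cy + sx * sy) + sy^2 = (sx * cy + cx * sy)^2"
  proof -
    have "(sx * cy + cx * sy)^2 = sx^2 * cy^2 + 2 * sx * sy * cx * cy + cx^2 * sy^2" by (simp add: algebra_simps power2_eq_square)
    also have "\<dots> = sx^2 * (sy^2 + 1) + 2 * sx * sy * cx * cy + (sx^2 + 1) * sy^2" using cx2 cy2 by simp
    also have "\<dots> = sx^2 + 2 * sx * sy * (cx * cy + sx * sy) + sy^2" by (simp add: algebra_simps power2_eq_square)
    finally show ?thesis by simp
  qed
  show "(sinh x / sinh (x+y))^2 + 2 * (sinh x / sinh (x+y)) * (sinh y / sinh (x+y)) * cosh (x+y)
         + (sinh y / sinh (x+y))^2 = 1"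
  proof -
    have "(sinh x / S)^2 + 2 * (sinh x / S) * (sinh y / S) * cosh (x+y) + (sinh y / S)^2
        = (sx^2 + 2 * sx * sy * (cx * cy + sx * sy) + sy^2) / S^2"
      using S by (simp add: cb sx_def sy_def field_simps power2_eq_square)
    also have "\<dots> = S^2 / S^2" unfolding e2 by (simp add: S_def sb)
    also have "\<dots> = 1" using S by simp
    finally show ?thesis by (simp add: S_def)
  qed
qed

lemma integrable_compact_complex:
  fixes f :: "complex \<Rightarrow> real"
  assumes "compact K" "continuous_on K f"
  shows "f integrable_on K"
proof -
  have "integrable lborel (\<lambda>x. indicator K x *\<^sub>R f x)"
    by (rule borel_integrable_compact[OF assms])
  then have "(\<lambda>x. indicator K x *\<^sub>R f x) integrable_on UNIV" by (rule integrable_on_lborel)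
  moreover have "(\<lambda>x. indicator K x *\<^sub>R f x) = (\<lambda>x. if x \<in> K then f x else 0)"
    by (auto simp: indicator_def fun_eq_iff)
  ultimately have "(\<lambda>x. if x \<in> K then f x else 0) integrable_on UNIV" by simp
  then show ?thesis by (simp add: integrable_restrict_UNIV)
qed

lemma norm_Lc: "(norm (Lc v))^2 = (v$1)^2 + (v$2)^2"
  by (simp add: normsq Lc_def)

theorem lemma15:
  fixes a b :: real and A B C :: complex
  assumes "0 < a" "a \<le> 1.8" "0 < b"
    and "A \<in> klein_disc" "B \<in> klein_disc" "C \<in> klein_disc"
    and "klein_dist C A = a" "klein_dist C B = b"
    and "klein_metric C (A - C) (B - C) = 0"
  shows "hyp_area (hyp_triangle A B C) \<ge> a / 5 * min b pi"
proof -
  note ap = assms(1) and a18 = assms(2) and bp = assms(3)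
  define b' where "b' = min b pi"
  have b'p: "0 < b'" and b'b: "b' \<le> b" and b'pi: "b' \<le> pi" using bp by (auto simp: b'_def)
  have nA: "0 < nn A" and nB: "0 < nn B" and nC: "0 < nn C" using assms(4-6) disc_nn by auto
  define a0 where "a0 = l0 A" define a1 where "a1 = l1 A" define a2 where "a2 = l2 A"
  define c0 where "c0 = l0 C" define c1 where "c1 = l1 C" define c2 where "c2 = l2 C"
  define e0 where "e0 = l0 B" define e1 where "e1 = l1 B" define e2 where "e2 = l2 B"
  have LA: "lor a0 a1 a2 a0 a1 a2 = 1" unfolding a0_def a1_def a2_def by (rule lor_ll_self[OF nA])
  have LB: "lor e0 e1 e2 e0 e1 e2 = 1" unfolding e0_def e1_def e2_def by (rule lor_ll_self[OF nB])
  have LC: "lor c0 c1 c2 c0 c1 c2 = 1" unfolding c0_def c1_def c2_def by (rule lor_ll_self[OF nC])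
  have LCA: "lor c0 c1 c2 a0 a1 a2 = cosh a"
    using cosh_kd[OF assms(6) assms(4)] assms(7) by (simp add: a0_def a1_def a2_def c0_def c1_def c2_def)
  have LAC: "lor a0 a1 a2 c0 c1 c2 = cosh a" using LCA by (simp add: lor_comm)
  have LCB: "lor c0 c1 c2 e0 e1 e2 = cosh b"
    using cosh_kd[OF assms(6) assms(5)] assms(8) by (simp add: e0_def e1_def e2_def c0_def c1_def c2_def)
  have LAB: "lor a0 a1 a2 e0 e1 e2 = cosh a * cosh b"
    using right_angle[OF assms(4) assms(5) assms(6) assms(9)] LAC LCB
    by (simp add: a0_def a1_def a2_def c0_def c1_def c2_def e0_def e1_def e2_def)
  define \<sigma> where "\<sigma> = sinh (b - b') / sinh b"
  define \<tau> where "\<tau> = sinh b' / sinh b"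
  have sbpos: "0 < sinh b" using bp by simp
  have \<sigma>0: "0 \<le> \<sigma>" using b'b sbpos by (simp add: \<sigma>_def)
  have \<tau>0: "0 < \<tau>" using b'p sbpos by (simp add: \<tau>_def)
  have bsplit: "b = (b - b') + b'" by simp
  have hs1: "\<sigma> + \<tau> * cosh b = cosh b'"
    using hyp_split(1)[of "b - b'" b'] b'b b'p unfolding \<sigma>_def \<tau>_def by simp
  have hs2: "\<sigma>^2 + 2 * \<sigma> * \<tau> * cosh b + \<tau>^2 = 1"
    using hyp_split(2)[of "b - b'" b'] b'b b'p unfolding \<sigma>_def \<tau>_def by simp
  define d0 where "d0 = \<sigma> * c0 + \<tau> * e0"
  define d1 where "d1 = \<sigma> * c1 + \<tau> * e1"
  define d2 where "d2 = \<sigma> * c2 + \<tau> * e2"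
  have LD: "lor d0 d1 d2 d0 d1 d2 = 1"
    unfolding d0_def d1_def d2_def lor_self2 LC LB LCB using hs2 by simp
  have LCD: "lor c0 c1 c2 d0 d1 d2 = cosh b'"
    unfolding d0_def d1_def d2_def lor_lin2 LC LCB using hs1 by simp
  have LAD: "lor a0 a1 a2 d0 d1 d2 = cosh a * cosh b'"
  proof -
    have "lor a0 a1 a2 d0 d1 d2 = \<sigma> * cosh a + \<tau> * (cosh a * cosh b)"
      unfolding d0_def d1_def d2_def lor_lin2 LAC LAB ..
    also have "\<dots> = cosh a * (\<sigma> + \<tau> * cosh b)" by (simp add: algebra_simps)
    finally show ?thesis using hs1 by simp
  qed
  have a0p: "0 < a0" and c0p: "0 < c0" and e0p: "0 < e0" using nA nB nC l0_pos
    by (auto simp: a0_def c0_def e0_def)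
  have d0p: "0 < d0" unfolding d0_def using \<sigma>0 \<tau>0 c0p e0p
    by (simp add: add_nonneg_pos)
  interpret T: tri a0 a1 a2 c0 c1 c2 d0 d1 d2 "cosh a" "cosh b'" "sinh a" "sinh b'"
  proof
    show "lor a0 a1 a2 a0 a1 a2 = 1" by (rule LA)
    show "lor c0 c1 c2 c0 c1 c2 = 1" by (rule LC)
    show "lor d0 d1 d2 d0 d1 d2 = 1" by (rule LD)
    show "lor a0 a1 a2 c0 c1 c2 = cosh a" by (rule LAC)
    show "lor c0 c1 c2 d0 d1 d2 = cosh b'" by (rule LCD)
    show "lor a0 a1 a2 d0 d1 d2 = cosh a * cosh b'" by (rule LAD)
    show "0 < a0" "0 < c0" "0 < d0" by (rule a0p, rule c0p, rule d0p)
    show "0 < sinh a" "0 < sinh b'" using ap b'p by simp_all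
    show "(cosh a)^2 = 1 + (sinh a)^2" "(cosh b')^2 = 1 + (sinh b')^2" by (simp_all add: cosh_square_eq)
    show "0 < cosh a" "0 < cosh b'" by simp_all
  qed
  let ?S = "box (vec 0) (vec 1) :: (real^2) set"
  let ?T = "hyp_triangle A B C"
  let ?f = "\<lambda>z::complex. 1 / (1 - (norm z)\<^sup>2) powr (3/2)"
  define V where "V = arctan (sinh a * cosh b' / sinh b') - arctan (sinh a / (cosh a * sinh b'))"
  have core: "(f2 has_integral V) (T.g ` ?S)" unfolding V_def by (rule T.core)
  have contain: "Lc (T.g v) \<in> ?T" if v: "v \<in> ?S" for v
  proof -
    define p where "p = v$1" define q where "q = v$2"
    have pq: "0 < p" "p < 1" "0 < q" "q < 1" using v by (simp_all add: mem_box2 p_def q_def)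
    have X0: "0 < T.x0 v" using T.x0_pos pq by (simp add: p_def q_def)
    define wA where "wA = (1 - p) * l0 A"
    define wC where "wC = (p * (1 - q) / cosh a + p * q / (cosh a * cosh b') * \<sigma>) * l0 C"
    define wB where "wB = (p * q / (cosh a * cosh b') * \<tau>) * l0 B"
    have wA0: "0 \<le> wA" using pq nA by (simp add: wA_def l0_def)
    have wC0: "0 \<le> wC" using pq nC \<sigma>0 by (simp add: wC_def l0_def)
    have wB0: "0 \<le> wB" using pq nB \<tau>0 by (simp add: wB_def l0_def)
    have ex0': "T.x0 v = (1 - p) * a0 + (p * (1 - q) / cosh a) * c0 + (p * q / (cosh a * cosh b')) * d0"
      unfolding T.x0_def T.X_lin p_def q_def ..
    have ex0: "T.x0 v = wA + wB + wC"
      unfolding ex0' by (simp add: wA_def wB_def wC_def d0_def a0_def c0_def e0_def algebra_simps add_divide_distrib)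
    have ex1': "T.x1 v = (1 - p) * a1 + (p * (1 - q) / cosh a) * c1 + (p * q / (cosh a * cosh b')) * d1"
      unfolding T.x1_def T.X_lin p_def q_def ..
    have ex1: "T.x1 v = wA * Re A + wB * Re B + wC * Re C"
      unfolding ex1' by (simp add: wA_def wB_def wC_def d1_def a1_def c1_def e1_def l1_def l0_def algebra_simps add_divide_distrib)
    have ex2': "T.x2 v = (1 - p) * a2 + (p * (1 - q) / cosh a) * c2 + (p * q / (cosh a * cosh b')) * d2"
      unfolding T.x2_def T.X_lin p_def q_def ..
    have ex2: "T.x2 v = wA * Im A + wB * Im B + wC * Im C"
      unfolding ex2' by (simp add: wA_def wB_def wC_def d2_def a2_def c2_def e2_def l2_def l0_def algebra_simps add_divide_distrib)
    have eqc: "Lc (T.g v) = (wA / T.x0 v) *\<^sub>R A + (wB / T.x0 v) *\<^sub>R B + (wC / T.x0 v) *\<^sub>R C"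
      unfolding T.g_def Lc_def complex_eq_iff using X0
      by (simp add: ex1 ex2 add_divide_distrib)
    have sum1: "wA / T.x0 v + wB / T.x0 v + wC / T.x0 v = 1"
      using X0 ex0 by (simp add: add_divide_distrib[symmetric])
    show ?thesis unfolding hyp_triangle_def convex_hull_3 eqc
      using wA0 wB0 wC0 X0 sum1 by (intro CollectI exI[of _ "wA / T.x0 v"] exI[of _ "wB / T.x0 v"] exI[of _ "wC / T.x0 v"]) simp
  qed
  have Tcompact: "compact ?T" unfolding hyp_triangle_def by (rule finite_imp_compact_convex_hull) simp
  have Tdisc: "?T \<subseteq> ball 0 1"
    unfolding hyp_triangle_def using assms(4-6)
    by (intro hull_minimal) (auto simp: klein_disc_def convex_ball)
  have sub: "Lc ` (T.g ` ?S) \<subseteq> ?T" using contain by auto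
  have bnd: "bounded (T.g ` ?S)"
  proof -
    have "T.g ` ?S \<subseteq> Lr ` ?T" using contain by (force intro: image_eqI[where x = "Lc (T.g _)"])
    moreover have "bounded (Lr ` ?T)"
    proof (rule bounded_linear_image)
      show "bounded ?T" using Tcompact by (rule compact_imp_bounded)
      have "linear Lr" unfolding linear_iff Lr_def by (simp add: vec2_eq)
      then show "bounded_linear Lr" by (simp add: linear_conv_bounded_linear)
    qed
    ultimately show ?thesis by (rule bounded_subset[rotated])
  qed
  have fLc: "(\<lambda>v. ?f (Lc v)) = f2" by (simp add: fun_eq_iff f2_def norm_Lc)
  have int1: "(?f has_integral V) (Lc ` (T.g ` ?S))"
    by (rule transfer_integral[OF bnd]) (unfold fLc, rule core)
  have fint: "?f integrable_on ?T"
  proof (rule integrable_compact_complex[OF Tcompact])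
    have "\<And>z. z \<in> ?T \<Longrightarrow> 0 < 1 - (norm z)\<^sup>2"
    proof -
      fix z assume "z \<in> ?T"
      then have "norm z < 1" using Tdisc by auto
      then have "norm z * norm z < 1 * 1" by (intro mult_strict_mono') auto
      then show "0 < 1 - (norm z)\<^sup>2" by (simp add: power2_eq_square)
    qed
    then show "continuous_on ?T ?f"
      by (auto intro!: continuous_intros) force+
  qed
  have "V \<le> hyp_area ?T"
  proof -
    have "integral (Lc ` (T.g ` ?S)) ?f \<le> integral ?T ?f"
      by (rule integral_subset_le[OF sub]) (use int1 fint in auto)
    moreover have "integral (Lc ` (T.g ` ?S)) ?f = V" using int1 by (rule integral_unique)
    ultimately show ?thesis by (simp add: hyp_area_def)
  qed
  moreover have "V = 2 * arctan (tanh (a/2) * tanh (b'/2))"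
  proof -
    have "V = 2 * arctan (sinh a * sinh b' / ((cosh a + 1) * (cosh b' + 1)))"
      unfolding V_def using ap b'p
      by (intro arctan_identity) (simp_all add: cosh_square_eq)
    also have "sinh a * sinh b' / ((cosh a + 1) * (cosh b' + 1)) = tanh (a/2) * tanh (b'/2)"
      by (simp add: tanh_half)
    finally show ?thesis .
  qed
  moreover have "a * b' / 5 \<le> 2 * arctan (tanh (a/2) * tanh (b'/2))"
    using main_ineq[OF ap a18 b'p b'pi] .
  ultimately show ?thesis by (simp add: b'_def)
qed

end
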